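(* For all finite multisets $\Gamma,\Delta$ of $\mathcal{L}_{A_m}^{\Box}$-formulas: if the sequent $\Gamma\Rightarrow\Delta$ is $\mathsf{K(A)}$-valid, then it is derivable in $\mathsf{GK(A_m)}$.
   Context: $\mathcal{L}_{A_m}^{\Box}$-formulas are built from a countably infinite set $\mathrm{Var}$ of variables using binary $\to$ and unary $\Box$. Fix $p_0\in\mathrm{Var}$; $\overline{0}:=p_0\to p_0$, $\neg\varphi:=\varphi\to\overline{0}$, $\varphi\&\psi:=\neg\varphi\to\psi$. A $\mathsf{K(A)}$-model $\langle W,R,V\rangle$: nonempty $W$, $R\subseteq W\times W$, $V\colon\mathrm{Var}\times W\to[-r,r]$ for some real $r\ge0$, extended by $V(\varphi\to\psi,x)=V(\psi,x)-V(\varphi,x)$, $V(\Box\varphi,x)=\inf_{\mathbb{R}}\{V(\varphi,y):Rxy\}$ (empty infimum $=0$). A formula is $\mathsf{K(A)}$-valid if its value is $\ge0$ at every world of every model. A sequent $\Gamma\Rightarrow\Delta$ (pair of finite multisets of formulas) is $\mathsf{K(A)}$-valid if $\mathcal{I}(\Gamma\Rightarrow\Delta)$ is, where $\mathcal{I}(\varphi_1,\dots,\varphi_n\Rightarrow\psi_1,\dots,\psi_m):=(\varphi_1\&\dots\&\varphi_n)\to(\psi_1\&\dots\&\psi_m)$, empty $\&$-combination $=\overline{0}$. Notation: commas = multiset union, $n\Gamma$ = $\Gamma$ repeated $n$ times, $n[\varphi]$ = $n$ copies of $\varphi$, $\Box\Gamma=[\Box\varphi:\varphi\in\Gamma]$.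 The calculus $\mathsf{GK(A_m)}$ has rules: (id) $\Delta\Rightarrow\Delta$; (cut) from $\Gamma,\varphi\Rightarrow\Delta$ and $\Pi\Rightarrow\varphi,\Sigma$ infer $\Gamma,\Pi\Rightarrow\Sigma,\Delta$; (mix) from $\Gamma\Rightarrow\Delta$ and $\Pi\Rightarrow\Sigma$ infer $\Gamma,\Pi\Rightarrow\Sigma,\Delta$; (sc$_n$) from $n\Gamma\Rightarrow n\Delta$ infer $\Gamma\Rightarrow\Delta$ ($n\ge2$); ($\to\Rightarrow$) from $\Gamma,\psi\Rightarrow\varphi,\Delta$ infer $\Gamma,\varphi\to\psi\Rightarrow\Delta$; ($\Rightarrow\to$) from $\Gamma,\varphi\Rightarrow\psi,\Delta$ infer $\Gamma\Rightarrow\varphi\to\psi,\Delta$; ($\Box_n$) from $\Gamma\Rightarrow n[\varphi]$ infer $\Box\Gamma\Rightarrow n[\Box\varphi]$ ($n\ge0$). A derivation is a finite tree of sequents in which each node with its parents is a rule instance. *)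

theory Defs
  imports Complex_Main "HOL-Library.Multiset"
begin

datatype fm = Var nat | Imp fm fm | Box fm

definition zero_fm :: fm where "zero_fm = Imp (Var 0) (Var 0)"
definition neg_fm :: "fm \<Rightarrow> fm" where "neg_fm \<phi> = Imp \<phi> zero_fm"
definition amp_fm :: "fm \<Rightarrow> fm \<Rightarrow> fm" where "amp_fm \<phi> \<psi> = Imp (neg_fm \<phi>) \<psi>"

fun amp_list :: "fm list \<Rightarrow> fm" where
  "amp_list [] = zero_fm"
| "amp_list [\<phi>] = \<phi>"
| "amp_list (\<phi> # \<psi> # \<chi>s) = amp_fm \<phi> (amp_list (\<psi> # \<chi>s))"

definition is_model :: "nat set \<Rightarrow> (nat \<Rightarrow> nat \<Rightarrow> bool) \<Rightarrow> (nat \<Rightarrow> nat \<Rightarrow> real) \<Rightarrow> bool" where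
  "is_model W R V \<longleftrightarrow> W \<noteq> {} \<and> (\<forall>x y. R x y \<longrightarrow> x \<in> W \<and> y \<in> W)
     \<and> (\<exists>r\<ge>0. \<forall>p. \<forall>x\<in>W. \<bar>V p x\<bar> \<le> r)"

fun eval :: "nat set \<Rightarrow> (nat \<Rightarrow> nat \<Rightarrow> bool) \<Rightarrow> (nat \<Rightarrow> nat \<Rightarrow> real) \<Rightarrow> fm \<Rightarrow> nat \<Rightarrow> real" where
  "eval W R V (Var p) x = V p x"
| "eval W R V (Imp \<phi> \<psi>) x = eval W R V \<psi> x - eval W R V \<phi> x"
| "eval W R V (Box \<phi>) x =
     (if {y \<in> W. R x y} = {} then 0 else (INF y\<in>{y \<in> W. R x y}. eval W R V \<phi> y))"

definition KA_valid :: "fm \<Rightarrow> bool" where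
  "KA_valid \<phi> \<longleftrightarrow> (\<forall>W R V. is_model W R V \<longrightarrow> (\<forall>x\<in>W. eval W R V \<phi> x \<ge> 0))"

definition seq_interp :: "fm multiset \<Rightarrow> fm multiset \<Rightarrow> fm" where
  "seq_interp \<Gamma> \<Delta> = Imp (amp_list (SOME xs. mset xs = \<Gamma>)) (amp_list (SOME ys. mset ys = \<Delta>))"

definition seq_valid :: "fm multiset \<Rightarrow> fm multiset \<Rightarrow> bool" where
  "seq_valid \<Gamma> \<Delta> \<longleftrightarrow> KA_valid (seq_interp \<Gamma> \<Delta>)"

inductive derivable :: "fm multiset \<Rightarrow> fm multiset \<Rightarrow> bool" where
  id: "derivable \<Delta> \<Delta>"
| cut: "derivable (\<Gamma> + {#\<phi>#}) \<Delta> \<Longrightarrow> derivable \<Pi> ({#\<phi>#} + \<Sigma>) \<Longrightarrow> derivable (\<Gamma> + \<Pi>) (\<Sigma> + \<Delta>)"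
| mix: "derivable \<Gamma> \<Delta> \<Longrightarrow> derivable \<Pi> \<Sigma> \<Longrightarrow> derivable (\<Gamma> + \<Pi>) (\<Sigma> + \<Delta>)"
| sc: "n \<ge> 2 \<Longrightarrow> derivable (repeat_mset n \<Gamma>) (repeat_mset n \<Delta>) \<Longrightarrow> derivable \<Gamma> \<Delta>"
| imp_left: "derivable (\<Gamma> + {#\<psi>#}) ({#\<phi>#} + \<Delta>) \<Longrightarrow> derivable (\<Gamma> + {#Imp \<phi> \<psi>#}) \<Delta>"
| imp_right: "derivable (\<Gamma> + {#\<phi>#}) ({#\<psi>#} + \<Delta>) \<Longrightarrow> derivable \<Gamma> ({#Imp \<phi> \<psi>#} + \<Delta>)"
| box: "derivable \<Gamma> (replicate_mset n \<phi>) \<Longrightarrow> derivable (image_mset Box \<Gamma>) (replicate_mset n (Box \<phi>))"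

end

theory Submission
  imports Defs "HOL-Library.Countable"
begin

lemma eval_zero_fm[simp]: "eval W R V zero_fm x = 0"
  by (simp add: zero_fm_def)

lemma eval_amp_fm: "eval W R V (amp_fm a b) x = eval W R V a x + eval W R V b x"
  by (simp add: amp_fm_def neg_fm_def)

lemma eval_amp_list: "eval W R V (amp_list xs) x = (\<Sum>\<phi>\<leftarrow>xs. eval W R V \<phi> x)"
  by (induction xs rule: amp_list.induct) (auto simp: eval_amp_fm)

lemma eval_seq_interp:
  "eval W R V (seq_interp \<Gamma> \<Delta>) x =
     sum_mset (image_mset (\<lambda>\<phi>. eval W R V \<phi> x) \<Delta>) - sum_mset (image_mset (\<lambda>\<phi>. eval W R V \<phi> x) \<Gamma>)"
proof -
  have g: "mset (SOME xs. mset xs = \<Gamma>) = \<Gamma>" by (rule someI_ex) (rule ex_mset)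
  have d: "mset (SOME xs. mset xs = \<Delta>) = \<Delta>" by (rule someI_ex) (rule ex_mset)
  have *: "(\<Sum>\<phi>\<leftarrow>xs. e \<phi>) = sum_mset (image_mset e (mset xs))" for xs and e :: "fm \<Rightarrow> real"
    by (metis mset_map sum_mset_sum_list)
  show ?thesis unfolding seq_interp_def by (simp add: eval_amp_list * g d)
qed

lemma eval_bounded:
  assumes "is_model W R V"
  shows "\<exists>B. \<forall>x\<in>W. \<bar>eval W R V \<phi> x\<bar> \<le> B"
proof (induction \<phi>)
  case (Var p)
  from assms obtain r where "\<forall>p. \<forall>x\<in>W. \<bar>V p x\<bar> \<le> r" unfolding is_model_def by blast
  then show ?case by auto
next
  case (Imp a b)
  then obtain B1 B2 where "\<forall>x\<in>W. \<bar>eval W R V a x\<bar> \<le> B1" "\<forall>x\<in>W. \<bar>eval W R V b x\<bar> \<le> B2" by blast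
  then have "\<forall>x\<in>W. \<bar>eval W R V (Imp a b) x\<bar> \<le> B1 + B2"
    by (auto simp: abs_le_iff) (smt (verit))+
  then show ?case by blast
next
  case (Box a)
  then obtain B where B: "\<forall>x\<in>W. \<bar>eval W R V a x\<bar> \<le> B" by blast
  have "\<bar>eval W R V (Box a) x\<bar> \<le> \<bar>B\<bar>" if "x \<in> W" for x
  proof (cases "{y \<in> W. R x y} = {}")
    case True then show ?thesis by simp
  next
    case False
    let ?Y = "{y \<in> W. R x y}"
    have lo: "(INF y\<in>?Y. eval W R V a y) \<ge> - B"
      by (rule cINF_greatest) (use False B in \<open>auto simp: abs_le_iff\<close>)
    obtain y where y: "y \<in> ?Y" using False by blast
    have bb: "bdd_below ((\<lambda>y. eval W R V a y) ` ?Y)"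
      using B by (intro bdd_belowI[of _ "-B"]) (auto simp: abs_le_iff)
    have "(INF y\<in>?Y. eval W R V a y) \<le> eval W R V a y"
      by (rule cINF_lower[OF bb y])
    also have "\<dots> \<le> B" using B y by (auto simp: abs_le_iff)
    finally show ?thesis using lo False by (auto simp: abs_le_iff)
  qed
  then show ?case by blast
qed

lemma eval_bdd_below:
  assumes "is_model W R V"
  shows "bdd_below ((\<lambda>y. eval W R V \<phi> y) ` {y \<in> W. R x y})"
proof -
  obtain B where "\<forall>x\<in>W. \<bar>eval W R V \<phi> x\<bar> \<le> B" using eval_bounded[OF assms] by blast
  then show ?thesis by (intro bdd_belowI[of _ "-B"]) (auto simp: abs_le_iff)
qed

lemma eval_Box_le:
  assumes "is_model W R V" "y \<in> W" "R x y"
  shows "eval W R V (Box \<phi>) x \<le> eval W R V \<phi> y"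
proof -
  have "{y \<in> W. R x y} \<noteq> {}" using assms by blast
  then show ?thesis using cINF_lower[OF eval_bdd_below[OF assms(1)], of y] assms by auto
qed

section \<open>Forms\<close>

type_synonym form = "fm \<Rightarrow> real"

definition supp :: "form \<Rightarrow> fm set" where "supp f = {\<theta>. f \<theta> \<noteq> 0}"

definition fval :: "nat set \<Rightarrow> (nat \<Rightarrow> nat \<Rightarrow> bool) \<Rightarrow> (nat \<Rightarrow> nat \<Rightarrow> real) \<Rightarrow> form \<Rightarrow> nat \<Rightarrow> real" where
  "fval W R V f x = (\<Sum>\<theta>\<in>supp f. f \<theta> * eval W R V \<theta> x)"

definition fvalid :: "form \<Rightarrow> bool" where
  "fvalid f \<longleftrightarrow> (\<forall>W R V. is_model W R V \<longrightarrow> (\<forall>x\<in>W. fval W R V f x \<ge> 0))"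

lemma fval_superset:
  assumes "finite X" "supp f \<subseteq> X"
  shows "fval W R V f x = (\<Sum>\<theta>\<in>X. f \<theta> * eval W R V \<theta> x)"
  unfolding fval_def
  by (rule sum.mono_neutral_left) (use assms in \<open>auto simp: supp_def\<close>)

definition mform :: "fm multiset \<Rightarrow> fm multiset \<Rightarrow> form" where
  "mform \<Gamma> \<Delta> = (\<lambda>\<theta>. real (count \<Delta> \<theta>) - real (count \<Gamma> \<theta>))"

lemma sum_mset_image_count:
  assumes "finite X" "set_mset M \<subseteq> X"
  shows "sum_mset (image_mset e M) = (\<Sum>\<theta>\<in>X. real (count M \<theta>) * (e \<theta> :: real))"
  using assms
proof (induction M)
  case empty then show ?case by simp
next
  case (add a M)
  have "sum_mset (image_mset e (add_mset a M)) = e a + (\<Sum>\<theta>\<in>X. real (count M \<theta>) * e \<theta>)"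
    using add by simp
  also have "\<dots> = (\<Sum>\<theta>\<in>X. real (count (add_mset a M) \<theta>) * e \<theta>)"
  proof -
    have "(\<Sum>\<theta>\<in>X. real (count (add_mset a M) \<theta>) * e \<theta>)
        = (\<Sum>\<theta>\<in>X. real (count M \<theta>) * e \<theta> + (if \<theta> = a then e \<theta> else 0))"
      by (intro sum.cong) (auto simp: algebra_simps)
    also have "\<dots> = (\<Sum>\<theta>\<in>X. real (count M \<theta>) * e \<theta>) + e a"
      using add.prems by (simp add: sum.distrib sum.delta)
    finally show ?thesis by simp
  qed
  finally show ?case .
qed

lemma supp_mform: "supp (mform \<Gamma> \<Delta>) \<subseteq> set_mset \<Gamma> \<union> set_mset \<Delta>"
  unfolding supp_def mform_def by (auto simp: not_in_iff)

lemma seq_valid_fvalid: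
  assumes "seq_valid \<Gamma> \<Delta>"
  shows "fvalid (mform \<Gamma> \<Delta>)"
  unfolding fvalid_def
proof (intro allI impI ballI)
  fix W R V x assume m: "is_model W R V" and x: "x \<in> W"
  let ?X = "set_mset \<Gamma> \<union> set_mset \<Delta>"
  have "0 \<le> eval W R V (seq_interp \<Gamma> \<Delta>) x"
    using assms m x unfolding seq_valid_def KA_valid_def by blast
  also have "\<dots> = (\<Sum>\<theta>\<in>?X. real (count \<Delta> \<theta>) * eval W R V \<theta> x) - (\<Sum>\<theta>\<in>?X. real (count \<Gamma> \<theta>) * eval W R V \<theta> x)"
    unfolding eval_seq_interp by (subst (1 2) sum_mset_image_count[of ?X]) auto
  also have "\<dots> = fval W R V (mform \<Gamma> \<Delta>) x"
    by (subst fval_superset[OF _ supp_mform]) (auto simp: mform_def sum_subtractf[symmetric] algebra_simps)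
  finally show "0 \<le> fval W R V (mform \<Gamma> \<Delta>) x" .
qed

section \<open>Pointed models\<close>

type_synonym pm = "nat set \<times> (nat \<Rightarrow> nat \<Rightarrow> bool) \<times> (nat \<Rightarrow> nat \<Rightarrow> real) \<times> nat"

definition pW :: "pm \<Rightarrow> nat set" where "pW t = fst t"
definition pR :: "pm \<Rightarrow> nat \<Rightarrow> nat \<Rightarrow> bool" where "pR t = fst (snd t)"
definition pV :: "pm \<Rightarrow> nat \<Rightarrow> nat \<Rightarrow> real" where "pV t = fst (snd (snd t))"
definition px :: "pm \<Rightarrow> nat" where "px t = snd (snd (snd t))"

lemma pacc[simp]: "pW (W,R,V,x) = W" "pR (W,R,V,x) = R" "pV (W,R,V,x) = V" "px (W,R,V,x) = x"
  by (simp_all add: pW_def pR_def pV_def px_def)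

definition pm_ok :: "pm \<Rightarrow> bool" where
  "pm_ok t \<longleftrightarrow> is_model (pW t) (pR t) (pV t) \<and> px t \<in> pW t"

definition ev :: "fm \<Rightarrow> pm \<Rightarrow> real" where
  "ev \<phi> t = eval (pW t) (pR t) (pV t) \<phi> (px t)"

lemma pm_okI: "is_model W R V \<Longrightarrow> x \<in> W \<Longrightarrow> pm_ok (W,R,V,x)"
  by (simp add: pm_ok_def)

lemma ev_simp[simp]: "ev \<phi> (W,R,V,x) = eval W R V \<phi> x"
  by (simp add: ev_def)

lemma model_R: "is_model W R V \<Longrightarrow> R x y \<Longrightarrow> x \<in> W \<and> y \<in> W"
  unfolding is_model_def by blast

lemma eval_Box_ne: assumes "{y \<in> W. R x y} \<noteq> {}" shows
    "eval W R V (Box \<phi>) x = (INF y\<in>{y \<in> W. R x y}. eval W R V \<phi> y)"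
  unfolding eval.simps(3) using assms by (rule if_not_P)



lemma nat_in_ser: "n = 0 \<or> n - 1 \<in> W \<Longrightarrow> n \<in> insert 0 (Suc ` W)"
  by (cases n) auto

definition zpm :: pm where "zpm = ({0}, \<lambda>_ _. False, \<lambda>_ _. 0, 0)"

lemma eval_zpm: "eval {0} (\<lambda>_ _. False) (\<lambda>_ _. 0) \<phi> x = 0"
  by (induction \<phi> arbitrary: x) auto

lemma zpm_ok: "pm_ok zpm" and ev_zpm[simp]: "ev \<phi> zpm = 0"
  by (auto simp: zpm_def pm_ok_def is_model_def eval_zpm)

lemma INF_scale:
  fixes f :: "'a \<Rightarrow> real"
  assumes "Y \<noteq> {}" "bdd_below (f ` Y)" "\<alpha> > 0"
  shows "(INF y\<in>Y. \<alpha> * f y) = \<alpha> * (INF y\<in>Y. f y)"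
proof (rule antisym)
  have bb: "bdd_below ((\<lambda>y. \<alpha> * f y) ` Y)"
  proof -
    obtain m where "\<forall>y\<in>Y. m \<le> f y" using assms(2) by (auto simp: bdd_below_def)
    then show ?thesis using assms(3) by (intro bdd_belowI[of _ "\<alpha> * m"]) auto
  qed
  have "(INF y\<in>Y. \<alpha> * f y) / \<alpha> \<le> (INF y\<in>Y. f y)"
  proof (rule cINF_greatest[OF assms(1)])
    fix y assume "y \<in> Y"
    then have "(INF y\<in>Y. \<alpha> * f y) \<le> \<alpha> * f y" by (rule cINF_lower[OF bb])
    then show "(INF y\<in>Y. \<alpha> * f y) / \<alpha> \<le> f y" using assms(3) by (simp add: divide_simps mult.commute)
  qed
  then show "(INF y\<in>Y. \<alpha> * f y) \<le> \<alpha> * (INF y\<in>Y. f y)" using assms(3) by (simp add: divide_simps mult.commute)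
next
  show "\<alpha> * (INF y\<in>Y. f y) \<le> (INF y\<in>Y. \<alpha> * f y)"
  proof (rule cINF_greatest[OF assms(1)])
    fix y assume "y \<in> Y"
    then have "(INF y\<in>Y. f y) \<le> f y" by (rule cINF_lower[OF assms(2)])
    then show "\<alpha> * (INF y\<in>Y. f y) \<le> \<alpha> * f y" using assms(3) by simp
  qed
qed

lemma scale_model:
  assumes "is_model W R V" "\<alpha> > 0"
  shows "is_model W R (\<lambda>p y. \<alpha> * V p y)"
proof -
  obtain r where r: "r \<ge> 0" "\<forall>p. \<forall>x\<in>W. \<bar>V p x\<bar> \<le> r" using assms(1) unfolding is_model_def by blast
  have "\<forall>p. \<forall>x\<in>W. \<bar>\<alpha> * V p x\<bar> \<le> \<alpha> * r"
    using r assms(2) by (auto simp: abs_mult intro: mult_left_mono)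
  then show ?thesis using assms r unfolding is_model_def by (auto intro!: exI[of _ "\<alpha> * r"])
qed

lemma scale_eval:
  assumes "is_model W R V" "\<alpha> > 0"
  shows "x \<in> W \<Longrightarrow> eval W R (\<lambda>p y. \<alpha> * V p y) \<phi> x = \<alpha> * eval W R V \<phi> x"
proof (induction \<phi> arbitrary: x)
  case (Var p) then show ?case by simp
next
  case (Imp a b) then show ?case by (simp add: algebra_simps)
next
  case (Box a)
  show ?case
  proof (cases "{y \<in> W. R x y} = {}")
    case True then show ?thesis by simp
  next
    case False
    have "(INF y\<in>{y \<in> W. R x y}. eval W R (\<lambda>p y. \<alpha> * V p y) a y) = (INF y\<in>{y \<in> W. R x y}. \<alpha> * eval W R V a y)"
      using Box.IH by (intro INF_cong) auto
    also have "\<dots> = \<alpha> * (INF y\<in>{y \<in> W. R x y}. eval W R V a y)"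
      by (rule INF_scale[OF False eval_bdd_below[OF assms(1)] assms(2)])
    finally show ?thesis by (simp only: eval_Box_ne[of W R x, OF False])
  qed
qed

definition spm :: "real \<Rightarrow> pm \<Rightarrow> pm" where
  "spm \<alpha> t = (pW t, pR t, \<lambda>p y. \<alpha> * pV t p y, px t)"

lemma spm_ok: "pm_ok t \<Longrightarrow> \<alpha> > 0 \<Longrightarrow> pm_ok (spm \<alpha> t)"
  and ev_spm: "pm_ok t \<Longrightarrow> \<alpha> > 0 \<Longrightarrow> ev \<phi> (spm \<alpha> t) = \<alpha> * ev \<phi> t"
  by (auto simp: spm_def pm_ok_def ev_def scale_model scale_eval)

subsection \<open>Serialisation\<close>

definition ser_W :: "nat set \<Rightarrow> nat set" where "ser_W W = insert 0 (Suc ` W)"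
lemma ser_W_ne[simp]: "ser_W W \<noteq> {}" and zero_ser_W[simp]: "0 \<in> ser_W W"
  and Suc_ser_W[simp]: "Suc a \<in> ser_W W \<longleftrightarrow> a \<in> W"
  by (auto simp: ser_W_def)

definition ser_R :: "nat set \<Rightarrow> (nat \<Rightarrow> nat \<Rightarrow> bool) \<Rightarrow> nat \<Rightarrow> nat \<Rightarrow> bool" where
  "ser_R W R a b \<longleftrightarrow> (a = 0 \<and> b = 0) \<or> (a > 0 \<and> b > 0 \<and> R (a - 1) (b - 1))
      \<or> (a > 0 \<and> a - 1 \<in> W \<and> b = 0 \<and> {y \<in> W. R (a - 1) y} = {})"
definition ser_V :: "(nat \<Rightarrow> nat \<Rightarrow> real) \<Rightarrow> nat \<Rightarrow> nat \<Rightarrow> real" where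
  "ser_V V p a = (if a = 0 then 0 else V p (a - 1))"

lemma ser_model:
  assumes "is_model W R V"
  shows "is_model (ser_W W) (ser_R W R) (ser_V V)"
proof -
  obtain r where r: "r \<ge> 0" "\<forall>p. \<forall>x\<in>W. \<bar>V p x\<bar> \<le> r" using assms unfolding is_model_def by blast
  have "\<forall>p. \<forall>x\<in>ser_W W. \<bar>ser_V V p x\<bar> \<le> r" using r by (auto simp: ser_W_def ser_V_def)
  moreover have "x \<in> ser_W W \<and> y \<in> ser_W W" if "ser_R W R x y" for x y
  proof -
    have "x = 0 \<or> x - 1 \<in> W" "y = 0 \<or> y - 1 \<in> W"
      using that model_R[OF assms, of "x - 1" "y - 1"] unfolding ser_R_def by auto
    then show ?thesis unfolding ser_W_def using nat_in_ser by blast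
  qed
  ultimately show ?thesis using r unfolding is_model_def by (auto simp: ser_W_def)
qed

lemma ser_serial:
  "a \<in> ser_W W \<Longrightarrow> {b \<in> ser_W W. ser_R W R a b} \<noteq> {}"
proof -
  assume a: "a \<in> ser_W W"
  show ?thesis
  proof (cases "a = 0")
    case True then show ?thesis by (auto simp: ser_W_def ser_R_def)
  next
    case False
    then obtain a' where a': "a = Suc a'" "a' \<in> W" using a by (auto simp: ser_W_def)
    show ?thesis
    proof (cases "{y \<in> W. R a' y} = {}")
      case True then show ?thesis using a' by (auto simp: ser_W_def ser_R_def)
    next
      case False
      then obtain y where "y \<in> W" "R a' y" by blast
      then have "Suc y \<in> {b \<in> ser_W W. ser_R W R a b}" using a' by (auto simp: ser_W_def ser_R_def)
      then show ?thesis by blast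
    qed
  qed
qed

lemma ser_eval:
  assumes "is_model W R V"
  shows "eval (ser_W W) (ser_R W R) (ser_V V) \<phi> 0 = 0 \<and>
         (\<forall>a\<in>W. eval (ser_W W) (ser_R W R) (ser_V V) \<phi> (Suc a) = eval W R V \<phi> a)"
proof (induction \<phi>)
  case (Var p) then show ?case by (simp add: ser_V_def)
next
  case (Imp a b) then show ?case by simp
next
  case (Box \<phi>)
  let ?e = "eval (ser_W W) (ser_R W R) (ser_V V)"
  have s0: "{b \<in> ser_W W. ser_R W R 0 b} = {0}" by (auto simp: ser_W_def ser_R_def)
  have "?e (Box \<phi>) 0 = 0" using Box by (simp add: s0)
  moreover have "?e (Box \<phi>) (Suc a) = eval W R V (Box \<phi>) a" if a: "a \<in> W" for a
  proof (cases "{y \<in> W. R a y} = {}")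
    case True
    then have "{b \<in> ser_W W. ser_R W R (Suc a) b} = {0}" using a by (auto simp: ser_W_def ser_R_def)
    then show ?thesis using Box True by simp
  next
    case False
    have eq: "{b \<in> ser_W W. ser_R W R (Suc a) b} = Suc ` {y \<in> W. R a y}"
    proof
      show "{b \<in> ser_W W. ser_R W R (Suc a) b} \<subseteq> Suc ` {y \<in> W. R a y}"
      proof
        fix b assume "b \<in> {b \<in> ser_W W. ser_R W R (Suc a) b}"
        then have b: "ser_R W R (Suc a) b" by simp
        with False have "b > 0" "R a (b - 1)" unfolding ser_R_def by auto
        then show "b \<in> Suc ` {y \<in> W. R a y}" using model_R[OF assms, of a "b - 1"]
          by (intro image_eqI[of _ _ "b - 1"]) auto
      qed
      show "Suc ` {y \<in> W. R a y} \<subseteq> {b \<in> ser_W W. ser_R W R (Suc a) b}"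
        by (auto simp: ser_W_def ser_R_def)
    qed
    have ne2: "{b \<in> ser_W W. ser_R W R (Suc a) b} \<noteq> {}" using False eq by auto
    have "?e (Box \<phi>) (Suc a) = (INF b\<in>{b \<in> ser_W W. ser_R W R (Suc a) b}. ?e \<phi> b)"
      by (rule eval_Box_ne[of "ser_W W" "ser_R W R" "Suc a", OF ne2])
    also have "\<dots> = (INF y\<in>{y \<in> W. R a y}. ?e \<phi> (Suc y))"
      by (simp only: eq image_image)
    also have "\<dots> = (INF y\<in>{y \<in> W. R a y}. eval W R V \<phi> y)"
      using Box by (intro INF_cong) auto
    finally show ?thesis by (simp only: eval_Box_ne[of W R a, OF False])
  qed
  ultimately show ?case by blast
qed

subsection \<open>Products of serial models\<close>

lemma INF_sum_prod:
  fixes f g :: "'a \<Rightarrow> real"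
  assumes "A \<noteq> {}" "B \<noteq> {}" "bdd_below (f ` A)" "bdd_below (g ` B)"
  shows "(INF p\<in>A \<times> B. f (fst p) + g (snd p)) = (INF a\<in>A. f a) + (INF b\<in>B. g b)"
proof (rule antisym)
  have ne: "A \<times> B \<noteq> {}" using assms by auto
  have bb: "bdd_below ((\<lambda>p. f (fst p) + g (snd p)) ` (A \<times> B))"
  proof -
    obtain m1 where "\<forall>a\<in>A. m1 \<le> f a" using assms(3) by (auto simp: bdd_below_def)
    moreover obtain m2 where "\<forall>b\<in>B. m2 \<le> g b" using assms(4) by (auto simp: bdd_below_def)
    ultimately show ?thesis by (intro bdd_belowI[of _ "m1 + m2"]) (auto intro: add_mono)
  qed
  let ?I = "(INF p\<in>A \<times> B. f (fst p) + g (snd p))"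
  have "?I - (INF b\<in>B. g b) \<le> f a" if a: "a \<in> A" for a
  proof -
    have "?I - f a \<le> (INF b\<in>B. g b)"
    proof (rule cINF_greatest[OF assms(2)])
      fix b assume "b \<in> B"
      then have "?I \<le> f a + g b" using cINF_lower[OF bb, of "(a,b)"] a by auto
      then show "?I - f a \<le> g b" by simp
    qed
    then show ?thesis by simp
  qed
  then have "?I - (INF b\<in>B. g b) \<le> (INF a\<in>A. f a)" by (intro cINF_greatest[OF assms(1)])
  then show "?I \<le> (INF a\<in>A. f a) + (INF b\<in>B. g b)" by simp
next
  show "(INF a\<in>A. f a) + (INF b\<in>B. g b) \<le> (INF p\<in>A \<times> B. f (fst p) + g (snd p))"
    using assms by (intro cINF_greatest) (auto intro!: add_mono cINF_lower)
qed

definition prod_W :: "nat set \<Rightarrow> nat set \<Rightarrow> nat set" where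
  "prod_W W1 W2 = (\<lambda>p. prod_encode p) ` (W1 \<times> W2)"
definition prod_R :: "(nat \<Rightarrow> nat \<Rightarrow> bool) \<Rightarrow> (nat \<Rightarrow> nat \<Rightarrow> bool) \<Rightarrow> nat \<Rightarrow> nat \<Rightarrow> bool" where
  "prod_R R1 R2 u v \<longleftrightarrow> R1 (fst (prod_decode u)) (fst (prod_decode v)) \<and> R2 (snd (prod_decode u)) (snd (prod_decode v))"
definition prod_V :: "(nat \<Rightarrow> nat \<Rightarrow> real) \<Rightarrow> (nat \<Rightarrow> nat \<Rightarrow> real) \<Rightarrow> nat \<Rightarrow> nat \<Rightarrow> real" where
  "prod_V V1 V2 p u = V1 p (fst (prod_decode u)) + V2 p (snd (prod_decode u))"

lemma prod_model:
  assumes "is_model W1 R1 V1" "is_model W2 R2 V2" "W1 \<noteq> {}"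
  shows "is_model (prod_W W1 W2) (prod_R R1 R2) (prod_V V1 V2)"
proof -
  obtain r1 where r1: "r1 \<ge> 0" "\<forall>p. \<forall>x\<in>W1. \<bar>V1 p x\<bar> \<le> r1" using assms(1) unfolding is_model_def by blast
  obtain r2 where r2: "r2 \<ge> 0" "\<forall>p. \<forall>x\<in>W2. \<bar>V2 p x\<bar> \<le> r2" using assms(2) unfolding is_model_def by blast
  have bnd: "\<forall>p. \<forall>x\<in>prod_W W1 W2. \<bar>prod_V V1 V2 p x\<bar> \<le> r1 + r2"
    using r1 r2 by (auto simp: prod_W_def prod_V_def intro!: order.trans[OF abs_triangle_ineq] add_mono)
  have inW: "x \<in> prod_W W1 W2" if "fst (prod_decode x) \<in> W1" "snd (prod_decode x) \<in> W2" for x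
    unfolding prod_W_def using that by (intro image_eqI[of _ _ "prod_decode x"]) (auto simp: mem_Times_iff)
  have rr: "prod_R R1 R2 x y \<Longrightarrow> x \<in> prod_W W1 W2 \<and> y \<in> prod_W W1 W2" for x y
    using model_R[OF assms(1)] model_R[OF assms(2)] unfolding prod_R_def by (auto intro!: inW)
  have ne: "prod_W W1 W2 \<noteq> {}" using assms(1,2) unfolding prod_W_def is_model_def by auto
  have "r1 + r2 \<ge> 0" using r1 r2 by simp
  then show ?thesis unfolding is_model_def using ne rr bnd by blast
qed

lemma prod_eval:
  assumes "is_model W1 R1 V1" "is_model W2 R2 V2"
    and s1: "\<And>a. a \<in> W1 \<Longrightarrow> {b \<in> W1. R1 a b} \<noteq> {}"
    and s2: "\<And>a. a \<in> W2 \<Longrightarrow> {b \<in> W2. R2 a b} \<noteq> {}"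
  shows "a \<in> W1 \<Longrightarrow> b \<in> W2 \<Longrightarrow> eval (prod_W W1 W2) (prod_R R1 R2) (prod_V V1 V2) \<phi> (prod_encode (a,b))
           = eval W1 R1 V1 \<phi> a + eval W2 R2 V2 \<phi> b"
proof (induction \<phi> arbitrary: a b)
  case (Var p) then show ?case by (simp add: prod_V_def)
next
  case (Imp x y) then show ?case by simp
next
  case (Box \<phi>)
  let ?A = "{y \<in> W1. R1 a y}" and ?B = "{y \<in> W2. R2 b y}"
  have eq: "{v \<in> prod_W W1 W2. prod_R R1 R2 (prod_encode (a,b)) v} = prod_encode ` (?A \<times> ?B)"
    unfolding prod_W_def prod_R_def by auto
  have nA: "?A \<noteq> {}" using s1[OF Box.prems(1)] .
  have nB: "?B \<noteq> {}" using s2[OF Box.prems(2)] .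
  have ne: "?A \<times> ?B \<noteq> {}" using nA nB by auto
  have "eval (prod_W W1 W2) (prod_R R1 R2) (prod_V V1 V2) (Box \<phi>) (prod_encode (a,b))
      = (INF p\<in>?A \<times> ?B. eval (prod_W W1 W2) (prod_R R1 R2) (prod_V V1 V2) \<phi> (prod_encode p))"
    using ne by (simp only: eval.simps eq image_is_empty if_False image_image)
  also have "\<dots> = (INF p\<in>?A \<times> ?B. eval W1 R1 V1 \<phi> (fst p) + eval W2 R2 V2 \<phi> (snd p))"
    using Box.IH by (intro INF_cong) auto
  also have "\<dots> = (INF y\<in>?A. eval W1 R1 V1 \<phi> y) + (INF y\<in>?B. eval W2 R2 V2 \<phi> y)"
    by (rule INF_sum_prod[OF nA nB eval_bdd_below[OF assms(1)] eval_bdd_below[OF assms(2)]])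
  finally show ?case by (simp only: eval_Box_ne[of W1 R1 a, OF nA] eval_Box_ne[of W2 R2 b, OF nB])
qed

definition sumpm :: "pm \<Rightarrow> pm \<Rightarrow> pm" where
  "sumpm t1 t2 = (prod_W (ser_W (pW t1)) (ser_W (pW t2)), prod_R (ser_R (pW t1) (pR t1)) (ser_R (pW t2) (pR t2)),
     prod_V (ser_V (pV t1)) (ser_V (pV t2)), prod_encode (Suc (px t1), Suc (px t2)))"

lemma sumpm_ok: "pm_ok t1 \<Longrightarrow> pm_ok t2 \<Longrightarrow> pm_ok (sumpm t1 t2)"
  unfolding pm_ok_def sumpm_def
proof (simp, intro conjI)
  assume a: "is_model (pW t1) (pR t1) (pV t1) \<and> px t1 \<in> pW t1" "is_model (pW t2) (pR t2) (pV t2) \<and> px t2 \<in> pW t2"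
  show "is_model (prod_W (ser_W (pW t1)) (ser_W (pW t2))) (prod_R (ser_R (pW t1) (pR t1)) (ser_R (pW t2) (pR t2)))
     (prod_V (ser_V (pV t1)) (ser_V (pV t2)))"
    by (intro prod_model ser_model) (use a in auto)
  show "prod_encode (Suc (px t1), Suc (px t2)) \<in> prod_W (ser_W (pW t1)) (ser_W (pW t2))"
    using a by (auto simp: prod_W_def intro!: image_eqI)
qed

lemma ev_sumpm: "pm_ok t1 \<Longrightarrow> pm_ok t2 \<Longrightarrow> ev \<phi> (sumpm t1 t2) = ev \<phi> t1 + ev \<phi> t2"
  unfolding pm_ok_def sumpm_def ev_def
proof simp
  assume a: "is_model (pW t1) (pR t1) (pV t1) \<and> px t1 \<in> pW t1" "is_model (pW t2) (pR t2) (pV t2) \<and> px t2 \<in> pW t2"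
  have "eval (prod_W (ser_W (pW t1)) (ser_W (pW t2))) (prod_R (ser_R (pW t1) (pR t1)) (ser_R (pW t2) (pR t2)))
     (prod_V (ser_V (pV t1)) (ser_V (pV t2))) \<phi> (prod_encode (Suc (px t1), Suc (px t2)))
    = eval (ser_W (pW t1)) (ser_R (pW t1) (pR t1)) (ser_V (pV t1)) \<phi> (Suc (px t1))
      + eval (ser_W (pW t2)) (ser_R (pW t2) (pR t2)) (ser_V (pV t2)) \<phi> (Suc (px t2))"
    by (intro prod_eval ser_model ser_serial) (use a in auto)
  also have "\<dots> = eval (pW t1) (pR t1) (pV t1) \<phi> (px t1) + eval (pW t2) (pR t2) (pV t2) \<phi> (px t2)"
    using a ser_eval by simp
  finally show "eval (prod_W (ser_W (pW t1)) (ser_W (pW t2))) (prod_R (ser_R (pW t1) (pR t1)) (ser_R (pW t2) (pR t2)))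
     (prod_V (ser_V (pV t1)) (ser_V (pV t2))) \<phi> (prod_encode (Suc (px t1), Suc (px t2)))
    = eval (pW t1) (pR t1) (pV t1) \<phi> (px t1) + eval (pW t2) (pR t2) (pV t2) \<phi> (px t2)" .
qed

instance fm :: countable by countable_datatype

section \<open>Union of finitely many pointed models under a fresh root\<close>

definition emb :: "fm \<Rightarrow> nat \<Rightarrow> nat" where "emb \<psi> w = Suc (prod_encode (to_nat \<psi>, w))"

lemma emb_eq[simp]: "emb \<psi> w = emb \<psi>' w' \<longleftrightarrow> \<psi> = \<psi>' \<and> w = w'"
  unfolding emb_def by (metis Pair_inject from_nat_to_nat prod_encode_eq Suc_inject)

lemma emb_ne0[simp]: "emb \<psi> w \<noteq> 0" "0 \<noteq> emb \<psi> w" by (auto simp: emb_def)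

definition uW :: "fm set \<Rightarrow> (fm \<Rightarrow> pm) \<Rightarrow> nat set" where
  "uW S T = insert 0 ((\<lambda>(\<psi>,w). emb \<psi> w) ` (SIGMA \<psi>:S. pW (T \<psi>)))"
definition uR :: "fm set \<Rightarrow> (fm \<Rightarrow> pm) \<Rightarrow> nat \<Rightarrow> nat \<Rightarrow> bool" where
  "uR S T u v \<longleftrightarrow> (u = 0 \<and> (\<exists>\<psi>\<in>S. v = emb \<psi> (px (T \<psi>))))
     \<or> (\<exists>\<psi>\<in>S. \<exists>w w'. u = emb \<psi> w \<and> v = emb \<psi> w' \<and> pR (T \<psi>) w w')"
definition uV :: "(fm \<Rightarrow> pm) \<Rightarrow> nat \<Rightarrow> nat \<Rightarrow> real" where
  "uV T p u = (if u = 0 then 0 else pV (T (from_nat (fst (prod_decode (u - 1))))) p (snd (prod_decode (u - 1))))"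

lemma uV_emb[simp]: "uV T p (emb \<psi> w) = pV (T \<psi>) p w"
  by (simp add: uV_def emb_def)

lemma emb_in_uW[simp]: "emb \<psi> w \<in> uW S T \<longleftrightarrow> \<psi> \<in> S \<and> w \<in> pW (T \<psi>)"
  unfolding uW_def by auto

lemma zero_in_uW[simp]: "0 \<in> uW S T" by (simp add: uW_def)

lemma uW_cases: "u \<in> uW S T \<Longrightarrow> u = 0 \<or> (\<exists>\<psi>\<in>S. \<exists>w\<in>pW (T \<psi>). u = emb \<psi> w)"
  unfolding uW_def by auto

lemma u_model:
  assumes fin: "finite S" and ok: "\<forall>\<psi>\<in>S. pm_ok (T \<psi>)"
  shows "is_model (uW S T) (uR S T) (uV T)"
proof -
  have "\<forall>\<psi>\<in>S. \<exists>r\<ge>0. \<forall>p. \<forall>x\<in>pW (T \<psi>). \<bar>pV (T \<psi>) p x\<bar> \<le> r"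
    using ok unfolding pm_ok_def is_model_def by blast
  then obtain r where r: "\<forall>\<psi>\<in>S. r \<psi> \<ge> 0 \<and> (\<forall>p. \<forall>x\<in>pW (T \<psi>). \<bar>pV (T \<psi>) p x\<bar> \<le> r \<psi>)"
    by metis
  have sum_ge: "r \<psi> \<le> (\<Sum>\<psi>\<in>S. r \<psi>)" if "\<psi> \<in> S" for \<psi>
    using r that fin by (intro member_le_sum) auto
  have bnd: "\<forall>p. \<forall>x\<in>uW S T. \<bar>uV T p x\<bar> \<le> (\<Sum>\<psi>\<in>S. r \<psi>)"
  proof (intro allI ballI)
    fix p x assume "x \<in> uW S T"
    then consider "x = 0" | \<psi> w where "\<psi> \<in> S" "w \<in> pW (T \<psi>)" "x = emb \<psi> w" using uW_cases by blast
    then show "\<bar>uV T p x\<bar> \<le> (\<Sum>\<psi>\<in>S. r \<psi>)"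
    proof cases
      case 1 then show ?thesis using r by (simp add: uV_def sum_nonneg)
    next
      case 2
      then have "\<bar>uV T p x\<bar> = \<bar>pV (T \<psi>) p w\<bar>" by simp
      also have "\<dots> \<le> r \<psi>" using r 2 by blast
      also have "\<dots> \<le> (\<Sum>\<psi>\<in>S. r \<psi>)" using sum_ge 2 by blast
      finally show ?thesis .
    qed
  qed
  have rr: "x \<in> uW S T \<and> y \<in> uW S T" if "uR S T x y" for x y
  proof -
    have m: "\<And>\<psi> w w'. \<psi> \<in> S \<Longrightarrow> pR (T \<psi>) w w' \<Longrightarrow> w \<in> pW (T \<psi>) \<and> w' \<in> pW (T \<psi>)"
      using ok model_R unfolding pm_ok_def by blast
    show ?thesis using that m ok unfolding uR_def pm_ok_def by auto
  qed
  have "(\<Sum>\<psi>\<in>S. r \<psi>) \<ge> 0" using r by (simp add: sum_nonneg)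
  then show ?thesis unfolding is_model_def using bnd rr zero_in_uW by blast
qed

lemma u_succ_emb:
  assumes "\<psi> \<in> S" "\<forall>\<psi>\<in>S. pm_ok (T \<psi>)"
  shows "{v \<in> uW S T. uR S T (emb \<psi> w) v} = emb \<psi> ` {w' \<in> pW (T \<psi>). pR (T \<psi>) w w'}"
proof -
  have m: "\<And>w w'. pR (T \<psi>) w w' \<Longrightarrow> w' \<in> pW (T \<psi>)"
    using assms model_R unfolding pm_ok_def by blast
  show ?thesis using assms m unfolding uR_def by auto
qed

lemma u_eval:
  assumes fin: "finite S" and ok: "\<forall>\<psi>\<in>S. pm_ok (T \<psi>)" and "\<psi> \<in> S"
  shows "w \<in> pW (T \<psi>) \<Longrightarrow> eval (uW S T) (uR S T) (uV T) \<phi> (emb \<psi> w) = eval (pW (T \<psi>)) (pR (T \<psi>)) (pV (T \<psi>)) \<phi> w"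
proof (induction \<phi> arbitrary: w)
  case (Var p) then show ?case by simp
next
  case (Imp a b) then show ?case by simp
next
  case (Box \<phi>)
  note eq = u_succ_emb[OF assms(3) ok, of w]
  show ?case
  proof (cases "{w' \<in> pW (T \<psi>). pR (T \<psi>) w w'} = {}")
    case True then show ?thesis by (simp add: eq)
  next
    case False
    then have ne: "{v \<in> uW S T. uR S T (emb \<psi> w) v} \<noteq> {}" by (simp add: eq)
    have "eval (uW S T) (uR S T) (uV T) (Box \<phi>) (emb \<psi> w)
        = (INF v\<in>{v \<in> uW S T. uR S T (emb \<psi> w) v}. eval (uW S T) (uR S T) (uV T) \<phi> v)"
      by (rule eval_Box_ne[of "uW S T" "uR S T" "emb \<psi> w", OF ne])
    also have "\<dots> = (INF w'\<in>{w' \<in> pW (T \<psi>). pR (T \<psi>) w w'}. eval (uW S T) (uR S T) (uV T) \<phi> (emb \<psi> w'))"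
      by (simp only: eq image_image)
    also have "\<dots> = (INF w'\<in>{w' \<in> pW (T \<psi>). pR (T \<psi>) w w'}. eval (pW (T \<psi>)) (pR (T \<psi>)) (pV (T \<psi>)) \<phi> w')"
      using Box.IH by (intro INF_cong) auto
    finally show ?thesis by (simp only: eval_Box_ne[of "pW (T \<psi>)" "pR (T \<psi>)" w, OF False])
  qed
qed

lemma u_root_Box:
  assumes fin: "finite S" and ne: "S \<noteq> {}" and ok: "\<forall>\<psi>\<in>S. pm_ok (T \<psi>)"
  shows "eval (uW S T) (uR S T) (uV T) (Box \<phi>) 0 = Min ((\<lambda>\<psi>. ev \<phi> (T \<psi>)) ` S)"
proof -
  have eq: "{v \<in> uW S T. uR S T 0 v} = (\<lambda>\<psi>. emb \<psi> (px (T \<psi>))) ` S"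
    using ok unfolding uR_def pm_ok_def by auto
  have ne2: "{v \<in> uW S T. uR S T 0 v} \<noteq> {}" using ne by (simp add: eq)
  have "eval (uW S T) (uR S T) (uV T) (Box \<phi>) 0 = (INF v\<in>{v \<in> uW S T. uR S T 0 v}. eval (uW S T) (uR S T) (uV T) \<phi> v)"
    by (rule eval_Box_ne[of "uW S T" "uR S T" 0, OF ne2])
  also have "\<dots> = (INF \<psi>\<in>S. eval (uW S T) (uR S T) (uV T) \<phi> (emb \<psi> (px (T \<psi>))))"
    by (simp only: eq image_image)
  also have "\<dots> = (INF \<psi>\<in>S. ev \<phi> (T \<psi>))"
    using u_eval[OF fin ok] ok unfolding ev_def pm_ok_def by (intro INF_cong) auto
  also have "\<dots> = Min ((\<lambda>\<psi>. ev \<phi> (T \<psi>)) ` S)"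
    using fin ne by (intro cInf_eq_Min) auto
  finally show ?thesis .
qed

section \<open>Atoms must cancel\<close>

lemma fvalid_atoms:
  assumes v: "fvalid f" and fin: "finite (supp f)" and noimp: "\<forall>a b. f (Imp a b) = 0"
  shows "f (Var p) = 0"
proof -
  have key: "f (Var p) * s \<ge> 0" if s: "\<bar>s\<bar> \<le> 1" for s
  proof -
    let ?V = "\<lambda>q (x::nat). if q = p then s else 0"
    have m: "is_model {0} (\<lambda>_ _. False) ?V" unfolding is_model_def using s by (auto intro!: exI[of _ 1])
    have e: "eval {0} (\<lambda>_ _. False) ?V \<theta> 0 = (if \<theta> = Var p then s else 0)" if "\<theta> \<in> supp f" for \<theta>
      using that noimp by (cases \<theta>) (auto simp: supp_def)
    have "0 \<le> fval {0} (\<lambda>_ _. False) ?V f 0" using v m unfolding fvalid_def by blast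
    also have "\<dots> = (\<Sum>\<theta>\<in>supp f. if \<theta> = Var p then f \<theta> * s else 0)"
      unfolding fval_def by (intro sum.cong) (auto simp: e)
    also have "\<dots> = (if Var p \<in> supp f then f (Var p) * s else 0)"
      using fin by (simp add: sum.delta)
    also have "\<dots> = f (Var p) * s" by (auto simp: supp_def)
    finally show ?thesis .
  qed
  from key[of 1] key[of "-1"] show ?thesis by simp
qed

lemma hb_fin:
  fixes \<rho> :: "('i \<Rightarrow> real) \<Rightarrow> real"
  assumes fin: "finite I"
    and sub: "\<And>x y. \<rho> (\<lambda>i. x i + y i) \<le> \<rho> x + \<rho> y"
    and hom: "\<And>\<alpha> x. \<alpha> > 0 \<Longrightarrow> \<rho> (\<lambda>i. \<alpha> * x i) \<le> \<alpha> * \<rho> x"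
  shows "\<exists>a. \<forall>x. (\<forall>i. i \<notin> I \<longrightarrow> x i = 0) \<longrightarrow> (\<Sum>i\<in>I. a i * x i) \<le> \<rho> x"
  using fin
proof (induction I rule: finite_induct)
  case empty
  have "\<rho> (\<lambda>i. 2 * 0) \<le> 2 * \<rho> (\<lambda>i. 0)" using hom[of 2 "\<lambda>i. 0"] by simp
  then have r0: "\<rho> (\<lambda>i. 0) \<ge> 0" by simp
  show ?case
  proof (intro exI[of _ "\<lambda>i. 0"] allI impI)
    fix x :: "'i \<Rightarrow> real" assume "\<forall>i. i \<notin> {} \<longrightarrow> x i = 0"
    then have "x = (\<lambda>i. 0)" by auto
    then show "(\<Sum>i\<in>{}. 0 * x i) \<le> \<rho> x" using r0 by simp
  qed
next
  case (insert k I)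
  from insert.IH obtain a where a: "\<And>x. (\<forall>i. i \<notin> I \<longrightarrow> x i = 0) \<Longrightarrow> (\<Sum>i\<in>I. a i * x i) \<le> \<rho> x" by blast
  define lf where "lf x = (\<Sum>i\<in>I. a i * x i)" for x :: "'i \<Rightarrow> real"
  define e where "e = (\<lambda>i. if i = k then (1::real) else 0)"
  let ?Y = "{y :: 'i \<Rightarrow> real. \<forall>i. i \<notin> I \<longrightarrow> y i = 0}"
  have la: "lf y \<le> \<rho> y" if "y \<in> ?Y" for y using a that unfolding lf_def by auto
  have LU: "lf y - \<rho> (\<lambda>i. y i - e i) \<le> \<rho> (\<lambda>i. z i + e i) - lf z" if "y \<in> ?Y" "z \<in> ?Y" for y z
  proof -
    have "lf y + lf z = lf (\<lambda>i. y i + z i)" by (simp add: lf_def sum.distrib algebra_simps)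
    also have "\<dots> \<le> \<rho> (\<lambda>i. y i + z i)" using la that by auto
    also have "(\<lambda>i. y i + z i) = (\<lambda>i. (y i - e i) + (z i + e i))" by auto
    also have "\<rho> \<dots> \<le> \<rho> (\<lambda>i. y i - e i) + \<rho> (\<lambda>i. z i + e i)" by (rule sub)
    finally show ?thesis by simp
  qed
  have Yne: "(\<lambda>i. 0) \<in> ?Y" by simp
  define b where "b = (SUP y\<in>?Y. lf y - \<rho> (\<lambda>i. y i - e i))"
  have bdd: "bdd_above ((\<lambda>y. lf y - \<rho> (\<lambda>i. y i - e i)) ` ?Y)"
    using LU[OF _ Yne] by (intro bdd_aboveI[of _ "\<rho> (\<lambda>i. 0 + e i) - lf (\<lambda>i. 0)"]) auto
  have bL: "lf y - \<rho> (\<lambda>i. y i - e i) \<le> b" if "y \<in> ?Y" for y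
    unfolding b_def by (rule cSUP_upper[OF that bdd])
  have bU: "b \<le> \<rho> (\<lambda>i. z i + e i) - lf z" if "z \<in> ?Y" for z
    unfolding b_def using that LU by (intro cSUP_least) auto
  have lscale: "lf (\<lambda>i. y i / t) = lf y / t" for y t
    by (simp add: lf_def sum_divide_distrib)
  have divY: "(\<lambda>i. y i / t) \<in> ?Y" if "y \<in> ?Y" for y t using that by auto
  show ?case
  proof (intro exI[of _ "a(k := b)"] allI impI)
    fix x :: "'i \<Rightarrow> real" assume x: "\<forall>i. i \<notin> insert k I \<longrightarrow> x i = 0"
    define y where "y = x(k := 0)"
    define t where "t = x k"
    have yY: "y \<in> ?Y" using x by (auto simp: y_def)
    have xeq: "x = (\<lambda>i. y i + t * e i)" by (auto simp: y_def t_def e_def)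
    have "(\<Sum>i\<in>insert k I. (a(k := b)) i * x i) = b * x k + (\<Sum>i\<in>I. (a(k := b)) i * x i)"
      using insert.hyps by simp
    also have "(\<Sum>i\<in>I. (a(k := b)) i * x i) = lf y"
      unfolding lf_def using insert.hyps by (intro sum.cong) (auto simp: y_def)
    finally have lhs: "(\<Sum>i\<in>insert k I. (a(k := b)) i * x i) = lf y + t * b" by (simp add: t_def)
    consider "t = 0" | "t > 0" | "t < 0" by linarith
    then show "(\<Sum>i\<in>insert k I. (a(k := b)) i * x i) \<le> \<rho> x"
    proof cases
      case 1
      then have "x = y" using xeq by simp
      then show ?thesis using lhs la[OF yY] 1 by simp
    next
      case 2
      have "b \<le> \<rho> (\<lambda>i. y i / t + e i) - lf y / t"
        using bU[OF divY[OF yY, of t]] by (simp add: lscale)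
      moreover have "\<rho> (\<lambda>i. y i / t + e i) \<le> (1 / t) * \<rho> x"
      proof -
        have "(\<lambda>i. (1 / t) * x i) = (\<lambda>i. y i / t + e i)" using 2 by (auto simp: xeq field_simps)
        then show ?thesis using hom[of "1 / t" x] 2 by simp
      qed
      ultimately have "b \<le> (1 / t) * \<rho> x - lf y / t" by linarith
      then have "t * b \<le> t * ((1 / t) * \<rho> x - lf y / t)" using 2 by (intro mult_left_mono) auto
      also have "\<dots> = \<rho> x - lf y" using 2 by (simp add: field_simps)
      finally show ?thesis using lhs by simp
    next
      case 3
      define s where "s = - t"
      have s: "s > 0" using 3 by (simp add: s_def)
      have "lf y / s - \<rho> (\<lambda>i. y i / s - e i) \<le> b"
        using bL[OF divY[OF yY, of s]] by (simp add: lscale)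
      moreover have "\<rho> (\<lambda>i. y i / s - e i) \<le> (1 / s) * \<rho> x"
      proof -
        have "(\<lambda>i. (1 / s) * x i) = (\<lambda>i. y i / s - e i)" using s by (auto simp: xeq s_def field_simps)
        then show ?thesis using hom[of "1 / s" x] s by simp
      qed
      ultimately have "lf y / s - (1 / s) * \<rho> x \<le> b" by linarith
      then have "s * (lf y / s - (1 / s) * \<rho> x) \<le> s * b" using s by (intro mult_left_mono) auto
      moreover have "lf y - \<rho> x = s * (lf y / s - (1 / s) * \<rho> x)" using s by (simp add: field_simps)
      ultimately have "lf y - \<rho> x \<le> s * b" by simp
      then show ?thesis using lhs by (simp add: s_def)
    qed
  qed
qed

lemma Max_add_le:
  fixes f g :: "'a \<Rightarrow> real"
  assumes "finite S" "S \<noteq> {}"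
  shows "Max ((\<lambda>\<psi>. f \<psi> + g \<psi>) ` S) \<le> Max (f ` S) + Max (g ` S)"
  using assms by (subst Max_le_iff) (auto intro!: add_mono Max_ge)

lemma Max_scale:
  fixes f :: "'a \<Rightarrow> real"
  assumes "finite S" "S \<noteq> {}" "\<alpha> \<ge> 0"
  shows "Max ((\<lambda>\<psi>. \<alpha> * f \<psi>) ` S) = \<alpha> * Max (f ` S)"
proof (rule antisym)
  show "Max ((\<lambda>\<psi>. \<alpha> * f \<psi>) ` S) \<le> \<alpha> * Max (f ` S)"
    using assms by (subst Max_le_iff) (auto intro!: mult_left_mono Max_ge)
  have "Max (f ` S) \<in> f ` S" using assms by (intro Max_in) auto
  then obtain \<psi>0 where "\<psi>0 \<in> S" "f \<psi>0 = Max (f ` S)" by (metis imageE)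
  then show "\<alpha> * Max (f ` S) \<le> Max ((\<lambda>\<psi>. \<alpha> * f \<psi>) ` S)"
    using assms by (metis (mono_tags, lifting) Max_ge finite_imageI image_eqI)
qed

lemma Max_neg:
  fixes f :: "'a \<Rightarrow> real"
  assumes "finite S" "S \<noteq> {}"
  shows "Max ((\<lambda>\<psi>. - f \<psi>) ` S) = - Min (f ` S)"
proof (rule antisym)
  show "Max ((\<lambda>\<psi>. - f \<psi>) ` S) \<le> - Min (f ` S)"
    using assms by (subst Max_le_iff) (auto intro!: Min_le)
  have "Min (f ` S) \<in> f ` S" using assms by (intro Min_in) auto
  then obtain \<psi>0 where "\<psi>0 \<in> S" "f \<psi>0 = Min (f ` S)" by (metis imageE)
  then show "- Min (f ` S) \<le> Max ((\<lambda>\<psi>. - f \<psi>) ` S)"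
    using assms by (metis (mono_tags, lifting) Max_ge finite_imageI image_eqI)
qed

lemma Max_const:
  assumes "S \<noteq> {}" shows "Max ((\<lambda>\<psi>. (c::real)) ` S) = c"
proof -
  have "(\<lambda>\<psi>. c) ` S = {c}" using assms by auto
  then show ?thesis by simp
qed

lemma Max_nonpos:
  fixes f :: "'a \<Rightarrow> real"
  assumes "finite S" "S \<noteq> {}" "\<forall>\<psi>\<in>S. f \<psi> \<le> 0"
  shows "Max (f ` S) \<le> 0"
  using assms by (subst Max_le_iff) auto

section \<open>The box lemma\<close>

definition sig :: "fm set \<Rightarrow> fm set \<Rightarrow> (fm \<Rightarrow> real) \<Rightarrow> (fm \<times> fm \<Rightarrow> real) \<Rightarrow> real" where
  "sig D S d x = (\<Sum>\<phi>\<in>D. d \<phi> * Max ((\<lambda>\<psi>. x (\<phi>,\<psi>)) ` S))"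

lemma sig_cong:
  assumes "\<forall>\<phi>\<in>D. \<forall>\<psi>\<in>S. x (\<phi>,\<psi>) = y (\<phi>,\<psi>)"
  shows "sig D S d x = sig D S d y"
  unfolding sig_def using assms by (intro sum.cong refl arg_cong2[where f="(*)"] arg_cong[where f=Max] image_cong) auto

lemma sig_sub:
  assumes "finite S" "S \<noteq> {}" "\<forall>\<phi>. d \<phi> \<ge> 0"
  shows "sig D S d (\<lambda>i. x i + y i) \<le> sig D S d x + sig D S d y"
  unfolding sig_def sum.distrib[symmetric]
  using assms by (intro sum_mono) (auto simp: distrib_left[symmetric] intro!: mult_left_mono Max_add_le)

lemma sig_scale:
  assumes "finite S" "S \<noteq> {}" "\<alpha> \<ge> 0"
  shows "sig D S d (\<lambda>i. \<alpha> * x i) = \<alpha> * sig D S d x"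
  unfolding sig_def sum_distrib_left
  using assms by (intro sum.cong refl) (simp add: Max_scale)

lemma sig_neg:
  assumes "finite S" "S \<noteq> {}"
  shows "sig D S d (\<lambda>i. - x i) = - (\<Sum>\<phi>\<in>D. d \<phi> * Min ((\<lambda>\<psi>. x (\<phi>,\<psi>)) ` S))"
  unfolding sig_def sum_negf[symmetric]
proof (intro sum.cong refl)
  fix \<phi> assume "\<phi> \<in> D"
  show "d \<phi> * Max ((\<lambda>\<psi>. - x (\<phi>,\<psi>)) ` S) = - (d \<phi> * Min ((\<lambda>\<psi>. x (\<phi>,\<psi>)) ` S))"
    using Max_neg[OF assms, of "\<lambda>\<psi>. x (\<phi>,\<psi>)"] by simp
qed

lemma sig_zero:
  assumes "S \<noteq> {}" shows "sig D S d (\<lambda>i. 0) = 0"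
  unfolding sig_def using Max_const[OF assms] by simp

lemma box_core:
  assumes finS: "finite S" and neS: "S \<noteq> {}" and finD: "finite D"
    and c0: "\<forall>\<psi>. c \<psi> \<ge> 0" and d0: "\<forall>\<phi>. d \<phi> \<ge> 0"
    and hyp: "\<And>T. \<forall>\<psi>\<in>S. pm_ok (T \<psi>) \<Longrightarrow>
         (\<Sum>\<phi>\<in>D. d \<phi> * Min ((\<lambda>\<psi>. ev \<phi> (T \<psi>)) ` S)) \<le> (\<Sum>\<psi>\<in>S. c \<psi> * ev \<psi> (T \<psi>))"
  shows "\<exists>\<mu>. (\<forall>\<phi>\<in>D. \<forall>\<psi>\<in>S. \<mu> \<phi> \<psi> \<ge> 0) \<and> (\<forall>\<phi>\<in>D. (\<Sum>\<psi>\<in>S. \<mu> \<phi> \<psi>) = d \<phi>)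
      \<and> (\<forall>\<psi>\<in>S. \<forall>t. pm_ok t \<longrightarrow> (\<Sum>\<phi>\<in>D. \<mu> \<phi> \<psi> * ev \<phi> t) \<le> c \<psi> * ev \<psi> t)"
proof -
  define Fam where "Fam = {T :: fm \<Rightarrow> pm. \<forall>\<psi>\<in>S. pm_ok (T \<psi>)}"
  define u where "u T = (\<lambda>(\<phi>,\<psi>). ev \<phi> (T \<psi>))" for T :: "fm \<Rightarrow> pm"
  define aa where "aa T = (\<Sum>\<psi>\<in>S. c \<psi> * ev \<psi> (T \<psi>))" for T :: "fm \<Rightarrow> pm"
  define \<sigma> where "\<sigma> = sig D S d"
  define F where "F x T = \<sigma> (\<lambda>i. x i - u T i) + aa T" for x T
  define \<rho> where "\<rho> x = (INF T\<in>Fam. F x T)" for x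
  have zF: "(\<lambda>_. zpm) \<in> Fam" by (simp add: Fam_def zpm_ok)
  then have Fne: "Fam \<noteq> {}" by blast
  have \<sigma>sub: "\<sigma> (\<lambda>i. x i + y i) \<le> \<sigma> x + \<sigma> y" for x y
    unfolding \<sigma>_def using finS neS d0 by (rule sig_sub)
  have \<sigma>scale: "\<sigma> (\<lambda>i. \<alpha> * x i) = \<alpha> * \<sigma> x" if "\<alpha> \<ge> 0" for \<alpha> x
    unfolding \<sigma>_def using finS neS that by (rule sig_scale)
  have \<sigma>cong: "\<sigma> x = \<sigma> y" if "\<forall>\<phi>\<in>D. \<forall>\<psi>\<in>S. x (\<phi>,\<psi>) = y (\<phi>,\<psi>)" for x y
    unfolding \<sigma>_def using that by (rule sig_cong)
  have \<sigma>0: "\<sigma> (\<lambda>i. 0) = 0" unfolding \<sigma>_def using neS by (rule sig_zero)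
  have \<sigma>neg: "\<sigma> (\<lambda>i. - x i) = - (\<Sum>\<phi>\<in>D. d \<phi> * Min ((\<lambda>\<psi>. x (\<phi>,\<psi>)) ` S))" for x
    unfolding \<sigma>_def using finS neS by (rule sig_neg)
  have Flow: "F x T \<ge> - \<sigma> (\<lambda>i. - x i)" if "T \<in> Fam" for x T
  proof -
    have "\<sigma> (\<lambda>i. - u T i) \<le> \<sigma> (\<lambda>i. x i - u T i) + \<sigma> (\<lambda>i. - x i)"
      using \<sigma>sub[of "\<lambda>i. x i - u T i" "\<lambda>i. - x i"] by simp
    moreover have "\<sigma> (\<lambda>i. - u T i) = - (\<Sum>\<phi>\<in>D. d \<phi> * Min ((\<lambda>\<psi>. ev \<phi> (T \<psi>)) ` S))"
      by (simp add: \<sigma>neg u_def)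
    moreover have "(\<Sum>\<phi>\<in>D. d \<phi> * Min ((\<lambda>\<psi>. ev \<phi> (T \<psi>)) ` S)) \<le> aa T"
      unfolding aa_def using hyp that by (simp add: Fam_def)
    ultimately show ?thesis unfolding F_def by linarith
  qed
  have bdd: "bdd_below ((\<lambda>T. F x T) ` Fam)" for x
    using Flow by (intro bdd_belowI[of _ "- \<sigma> (\<lambda>i. - x i)"]) auto
  have \<rho>le: "\<rho> x \<le> F x T" if "T \<in> Fam" for x T
    unfolding \<rho>_def by (rule cINF_lower[OF bdd that])
  have \<rho>ge: "c' \<le> \<rho> x" if "\<And>T. T \<in> Fam \<Longrightarrow> c' \<le> F x T" for c' x
    unfolding \<rho>_def using Fne that by (intro cINF_greatest) auto
  have sumF: "(\<lambda>\<psi>. sumpm (T1 \<psi>) (T2 \<psi>)) \<in> Fam" if "T1 \<in> Fam" "T2 \<in> Fam" for T1 T2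
    using that by (auto simp: Fam_def sumpm_ok)
  have Fsum: "F (\<lambda>i. x i + y i) (\<lambda>\<psi>. sumpm (T1 \<psi>) (T2 \<psi>)) \<le> F x T1 + F y T2"
    if "T1 \<in> Fam" "T2 \<in> Fam" for x y T1 T2
  proof -
    have "\<sigma> (\<lambda>i. x i + y i - u (\<lambda>\<psi>. sumpm (T1 \<psi>) (T2 \<psi>)) i) = \<sigma> (\<lambda>i. (x i - u T1 i) + (y i - u T2 i))"
      using that by (intro \<sigma>cong) (auto simp: u_def Fam_def ev_sumpm)
    also have "\<dots> \<le> \<sigma> (\<lambda>i. x i - u T1 i) + \<sigma> (\<lambda>i. y i - u T2 i)" by (rule \<sigma>sub)
    finally have 1: "\<sigma> (\<lambda>i. x i + y i - u (\<lambda>\<psi>. sumpm (T1 \<psi>) (T2 \<psi>)) i) \<le> \<sigma> (\<lambda>i. x i - u T1 i) + \<sigma> (\<lambda>i. y i - u T2 i)" .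
    have 2: "aa (\<lambda>\<psi>. sumpm (T1 \<psi>) (T2 \<psi>)) = aa T1 + aa T2"
      unfolding aa_def sum.distrib[symmetric] using that
      by (intro sum.cong refl) (auto simp: Fam_def ev_sumpm algebra_simps)
    show ?thesis using 1 2 unfolding F_def by linarith
  qed
  have \<rho>sub: "\<rho> (\<lambda>i. x i + y i) \<le> \<rho> x + \<rho> y" for x y
  proof -
    have "\<rho> (\<lambda>i. x i + y i) - F y T2 \<le> \<rho> x" if T2: "T2 \<in> Fam" for T2
    proof (rule \<rho>ge)
      fix T1 assume T1: "T1 \<in> Fam"
      have "\<rho> (\<lambda>i. x i + y i) \<le> F (\<lambda>i. x i + y i) (\<lambda>\<psi>. sumpm (T1 \<psi>) (T2 \<psi>))"
        by (rule \<rho>le[OF sumF[OF T1 T2]])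
      also have "\<dots> \<le> F x T1 + F y T2" by (rule Fsum[OF T1 T2])
      finally show "\<rho> (\<lambda>i. x i + y i) - F y T2 \<le> F x T1" by simp
    qed
    then have "\<rho> (\<lambda>i. x i + y i) - \<rho> x \<le> \<rho> y"
      by (intro \<rho>ge) (smt (verit))
    then show ?thesis by simp
  qed
  have scF: "(\<lambda>\<psi>. spm \<alpha> (T \<psi>)) \<in> Fam" if "T \<in> Fam" "\<alpha> > 0" for T \<alpha>
    using that by (auto simp: Fam_def spm_ok)
  have Fscale: "F (\<lambda>i. \<alpha> * x i) (\<lambda>\<psi>. spm \<alpha> (T \<psi>)) = \<alpha> * F x T" if "T \<in> Fam" "\<alpha> > 0" for x T \<alpha>
  proof -
    have "\<sigma> (\<lambda>i. \<alpha> * x i - u (\<lambda>\<psi>. spm \<alpha> (T \<psi>)) i) = \<sigma> (\<lambda>i. \<alpha> * (x i - u T i))"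
      using that by (intro \<sigma>cong) (auto simp: u_def Fam_def ev_spm algebra_simps)
    also have "\<dots> = \<alpha> * \<sigma> (\<lambda>i. x i - u T i)" using that by (intro \<sigma>scale) auto
    finally have 1: "\<sigma> (\<lambda>i. \<alpha> * x i - u (\<lambda>\<psi>. spm \<alpha> (T \<psi>)) i) = \<alpha> * \<sigma> (\<lambda>i. x i - u T i)" .
    have 2: "aa (\<lambda>\<psi>. spm \<alpha> (T \<psi>)) = \<alpha> * aa T"
      unfolding aa_def sum_distrib_left using that
      by (intro sum.cong refl) (auto simp: Fam_def ev_spm algebra_simps)
    show ?thesis using 1 2 unfolding F_def by (simp add: algebra_simps)
  qed
  have \<rho>hom: "\<rho> (\<lambda>i. \<alpha> * x i) \<le> \<alpha> * \<rho> x" if \<alpha>: "\<alpha> > 0" for \<alpha> x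
  proof -
    have "\<rho> (\<lambda>i. \<alpha> * x i) / \<alpha> \<le> \<rho> x"
    proof (rule \<rho>ge)
      fix T assume T: "T \<in> Fam"
      have "\<rho> (\<lambda>i. \<alpha> * x i) \<le> \<alpha> * F x T"
        using \<rho>le[of "\<lambda>\<psi>. spm \<alpha> (T \<psi>)" "\<lambda>i. \<alpha> * x i", OF scF[OF T \<alpha>]] Fscale[of T \<alpha> x, OF T \<alpha>] by simp
      then show "\<rho> (\<lambda>i. \<alpha> * x i) / \<alpha> \<le> F x T" using \<alpha> by (simp add: divide_simps mult.commute)
    qed
    then show ?thesis using \<alpha> by (simp add: divide_simps mult.commute)
  qed
  \<comment> \<open>Hahn-Banach\<close>
  obtain a where a: "\<And>x. (\<forall>i. i \<notin> D \<times> S \<longrightarrow> x i = 0) \<Longrightarrow> (\<Sum>i\<in>D \<times> S. a i * x i) \<le> \<rho> x"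
    using hb_fin[of "D \<times> S" \<rho>, OF _ \<rho>sub \<rho>hom] finD finS by blast
  have u0: "u (\<lambda>_. zpm) = (\<lambda>i. 0)" by (auto simp: u_def)
  have aa0: "aa (\<lambda>_. zpm) = 0" by (simp add: aa_def)
  have \<rho>\<sigma>: "\<rho> x \<le> \<sigma> x" for x
    using \<rho>le[OF zF, of x] by (simp add: F_def u0 aa0)
  have a\<sigma>: "(\<Sum>i\<in>D \<times> S. a i * x i) \<le> \<sigma> x" if "\<forall>i. i \<notin> D \<times> S \<longrightarrow> x i = 0" for x
    using a[OF that] \<rho>\<sigma>[of x] by linarith
  define \<mu> where "\<mu> \<phi> \<psi> = a (\<phi>,\<psi>)" for \<phi> \<psi>
  have sumDS: "(\<Sum>i\<in>D \<times> S. a i * x i) = (\<Sum>\<phi>\<in>D. \<Sum>\<psi>\<in>S. \<mu> \<phi> \<psi> * x (\<phi>,\<psi>))" for x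
    unfolding \<mu>_def by (simp add: sum.cartesian_product)
  have pos: "\<mu> \<phi>0 \<psi>0 \<ge> 0" if "\<phi>0 \<in> D" "\<psi>0 \<in> S" for \<phi>0 \<psi>0
  proof -
    define x where "x = (\<lambda>i. if i = (\<phi>0,\<psi>0) then -1 else (0::real))"
    have xs: "\<forall>i. i \<notin> D \<times> S \<longrightarrow> x i = 0" using that by (auto simp: x_def)
    have "(\<Sum>i\<in>D \<times> S. a i * x i) = - \<mu> \<phi>0 \<psi>0"
      using that finD finS by (simp add: x_def \<mu>_def if_distrib sum.delta cong: if_cong)
    moreover have "\<sigma> x \<le> 0"
    proof -
      have "Max ((\<lambda>\<psi>. x (\<phi>,\<psi>)) ` S) \<le> 0" for \<phi>
        by (rule Max_nonpos) (use finS neS in \<open>auto simp: x_def\<close>)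
      then show ?thesis unfolding \<sigma>_def sig_def using d0
        by (intro sum_nonpos mult_nonneg_nonpos) auto
    qed
    ultimately show ?thesis using a\<sigma>[OF xs] by linarith
  qed
  have row: "(\<Sum>\<psi>\<in>S. \<mu> \<phi>0 \<psi>) = d \<phi>0" if "\<phi>0 \<in> D" for \<phi>0
  proof -
    have key: "s * (\<Sum>\<psi>\<in>S. \<mu> \<phi>0 \<psi>) \<le> s * d \<phi>0" if s: "s = 1 \<or> s = -1" for s
    proof -
      define x where "x = (\<lambda>i. if fst i = \<phi>0 \<and> snd i \<in> S then s else (0::real))"
      have xs: "\<forall>i. i \<notin> D \<times> S \<longrightarrow> x i = 0" using \<open>\<phi>0 \<in> D\<close> by (auto simp: x_def)
      have "(\<Sum>i\<in>D \<times> S. a i * x i) = (\<Sum>\<phi>\<in>D. \<Sum>\<psi>\<in>S. \<mu> \<phi> \<psi> * x (\<phi>,\<psi>))" by (rule sumDS)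
      also have "\<dots> = (\<Sum>\<phi>\<in>D. if \<phi> = \<phi>0 then (\<Sum>\<psi>\<in>S. \<mu> \<phi> \<psi> * s) else 0)"
        by (intro sum.cong refl) (auto simp: x_def)
      also have "\<dots> = s * (\<Sum>\<psi>\<in>S. \<mu> \<phi>0 \<psi>)"
        using finD \<open>\<phi>0 \<in> D\<close> by (simp add: sum_distrib_left mult.commute)
      finally have l: "(\<Sum>i\<in>D \<times> S. a i * x i) = s * (\<Sum>\<psi>\<in>S. \<mu> \<phi>0 \<psi>)" .
      have "\<sigma> x = (\<Sum>\<phi>\<in>D. if \<phi> = \<phi>0 then d \<phi> * s else 0)"
        unfolding \<sigma>_def sig_def
      proof (intro sum.cong refl)
        fix \<phi> assume "\<phi> \<in> D"
        show "d \<phi> * Max ((\<lambda>\<psi>. x (\<phi>, \<psi>)) ` S) = (if \<phi> = \<phi>0 then d \<phi> * s else 0)"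
        proof (cases "\<phi> = \<phi>0")
          case True
          have "(\<lambda>\<psi>. x (\<phi>, \<psi>)) ` S = (\<lambda>\<psi>. s) ` S" using True by (auto simp: x_def)
          then show ?thesis using True Max_const[OF neS, of s] by simp
        next
          case False
          have "(\<lambda>\<psi>. x (\<phi>, \<psi>)) ` S = (\<lambda>\<psi>. 0) ` S" using False by (auto simp: x_def)
          then show ?thesis using False Max_const[OF neS, of 0] by simp
        qed
      qed
      also have "\<dots> = s * d \<phi>0" using finD \<open>\<phi>0 \<in> D\<close> by (simp add: mult.commute)
      finally show ?thesis using a\<sigma>[OF xs] l by simp
    qed
    from key[of 1] key[of "-1"] show ?thesis by simp
  qed
  have child: "(\<Sum>\<phi>\<in>D. \<mu> \<phi> \<psi>0 * ev \<phi> t) \<le> c \<psi>0 * ev \<psi>0 t" if "\<psi>0 \<in> S" "pm_ok t" for \<psi>0 t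
  proof -
    define T where "T = (\<lambda>\<psi>. if \<psi> = \<psi>0 then t else zpm)"
    have TF: "T \<in> Fam" using that by (auto simp: Fam_def T_def zpm_ok)
    define x where "x = (\<lambda>i. if fst i \<in> D \<and> snd i \<in> S then u T i else 0)"
    have xs: "\<forall>i. i \<notin> D \<times> S \<longrightarrow> x i = 0" by (auto simp: x_def)
    have "(\<Sum>i\<in>D \<times> S. a i * x i) = (\<Sum>\<phi>\<in>D. \<Sum>\<psi>\<in>S. \<mu> \<phi> \<psi> * x (\<phi>,\<psi>))" by (rule sumDS)
    also have "\<dots> = (\<Sum>\<phi>\<in>D. \<Sum>\<psi>\<in>S. if \<psi> = \<psi>0 then \<mu> \<phi> \<psi> * ev \<phi> t else 0)"
      by (intro sum.cong refl) (auto simp: x_def u_def T_def)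
    also have "\<dots> = (\<Sum>\<phi>\<in>D. \<mu> \<phi> \<psi>0 * ev \<phi> t)"
      using finS that by (simp add: sum.delta)
    finally have l: "(\<Sum>i\<in>D \<times> S. a i * x i) = (\<Sum>\<phi>\<in>D. \<mu> \<phi> \<psi>0 * ev \<phi> t)" .
    have "\<rho> x \<le> F x T" by (rule \<rho>le[OF TF])
    also have "F x T = \<sigma> (\<lambda>i. 0) + aa T"
      unfolding F_def by (subst \<sigma>cong[of _ "\<lambda>i. 0"]) (auto simp: x_def)
    also have "aa T = c \<psi>0 * ev \<psi>0 t"
      unfolding aa_def using finS that by (simp add: T_def if_distrib sum.delta cong: if_cong)
    finally show ?thesis using a[OF xs] l \<sigma>0 by simp
  qed
  show ?thesis using pos row child by blast
qed

section \<open>Real-weighted derivations\<close>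

definition msr :: "form \<Rightarrow> nat" where "msr f = (\<Sum>\<theta>\<in>supp f. size \<theta>)"

definition impstep :: "form \<Rightarrow> fm \<Rightarrow> fm \<Rightarrow> form" where
  "impstep f \<phi> \<psi> = (\<lambda>\<theta>. f \<theta> - (if \<theta> = Imp \<phi> \<psi> then f (Imp \<phi> \<psi>) else 0)
      + (if \<theta> = \<psi> then f (Imp \<phi> \<psi>) else 0) - (if \<theta> = \<phi> then f (Imp \<phi> \<psi>) else 0))"

definition child :: "(fm \<Rightarrow> real) \<Rightarrow> (fm \<Rightarrow> fm \<Rightarrow> real) \<Rightarrow> fm \<Rightarrow> form" where
  "child c \<mu> \<psi> = (\<lambda>\<theta>. (if \<theta> = \<psi> then c \<psi> else 0) - \<mu> \<theta> \<psi>)"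

inductive rd :: "real set \<Rightarrow> form \<Rightarrow> bool" for K where
  rimp: "rd K (impstep f \<phi> \<psi>) \<Longrightarrow> finite (supp f) \<Longrightarrow> (\<forall>\<theta>. f \<theta> \<in> K) \<Longrightarrow> rd K f"
| rbox: "finite S \<Longrightarrow> finite (supp f) \<Longrightarrow> (\<forall>\<theta>. f \<theta> \<in> K) \<Longrightarrow> (\<forall>p. f (Var p) = 0)
   \<Longrightarrow> (\<forall>a b. f (Imp a b) = 0)
   \<Longrightarrow> (\<forall>\<theta>. f (Box \<theta>) = c \<theta> - d \<theta>) \<Longrightarrow> (\<forall>\<theta>. 0 \<le> c \<theta> \<and> 0 \<le> d \<theta> \<and> (c \<theta> = 0 \<or> d \<theta> = 0))
   \<Longrightarrow> (\<forall>\<theta>. \<theta> \<notin> S \<longrightarrow> c \<theta> = 0) \<Longrightarrow> (\<forall>\<theta> \<psi>. 0 \<le> \<mu> \<theta> \<psi>) \<Longrightarrow> (\<forall>\<theta> \<psi>. \<psi> \<notin> S \<longrightarrow> \<mu> \<theta> \<psi> = 0)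
   \<Longrightarrow> (\<forall>\<theta>. (\<Sum>\<psi>\<in>S. \<mu> \<theta> \<psi>) = d \<theta>) \<Longrightarrow> (\<forall>\<theta>. c \<theta> \<in> K \<and> d \<theta> \<in> K) \<Longrightarrow> (\<forall>\<theta> \<psi>. \<mu> \<theta> \<psi> \<in> K)
   \<Longrightarrow> (\<forall>\<psi>\<in>S. rd K (child c \<mu> \<psi>)) \<Longrightarrow> rd K f"

lemma fvalidD: "fvalid f \<Longrightarrow> is_model W R V \<Longrightarrow> x \<in> W \<Longrightarrow> fval W R V f x \<ge> 0"
  unfolding fvalid_def by blast

lemma size_Imp_ne: "Imp \<phi> \<psi> \<noteq> \<phi>" "Imp \<phi> \<psi> \<noteq> \<psi>"
proof -
  show "Imp \<phi> \<psi> \<noteq> \<phi>" by (rule notI, drule arg_cong[where f=size], simp)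
  show "Imp \<phi> \<psi> \<noteq> \<psi>" by (rule notI, drule arg_cong[where f=size], simp)
qed

lemma impstep_props:
  assumes fin: "finite (supp f)" and nz: "f (Imp \<phi> \<psi>) \<noteq> 0"
  shows "finite (supp (impstep f \<phi> \<psi>))" "msr (impstep f \<phi> \<psi>) < msr f"
    "fval W R V (impstep f \<phi> \<psi>) x = fval W R V f x"
proof -
  let ?f' = "impstep f \<phi> \<psi>" and ?I = "Imp \<phi> \<psi>"
  have ne: "?I \<noteq> \<phi>" "?I \<noteq> \<psi>" by (rule size_Imp_ne)+
  have sub: "supp ?f' \<subseteq> (supp f - {?I}) \<union> {\<phi>, \<psi>}"
    using ne unfolding supp_def impstep_def by auto
  have Iin: "?I \<in> supp f" using nz by (simp add: supp_def)
  show "finite (supp ?f')" by (rule finite_subset[OF sub]) (use fin in simp)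
  have "msr ?f' \<le> (\<Sum>\<theta>\<in>(supp f - {?I}) \<union> {\<phi>, \<psi>}. size \<theta>)"
    unfolding msr_def using sub fin by (intro sum_mono2) auto
  also have "\<dots> \<le> (\<Sum>\<theta>\<in>supp f - {?I}. size \<theta>) + (\<Sum>\<theta>\<in>{\<phi>, \<psi>}. size \<theta>)"
  proof -
    have "(\<Sum>\<theta>\<in>(supp f - {?I}) \<union> {\<phi>, \<psi>}. size \<theta>) + (\<Sum>\<theta>\<in>(supp f - {?I}) \<inter> {\<phi>, \<psi>}. size \<theta>)
        = (\<Sum>\<theta>\<in>supp f - {?I}. size \<theta>) + (\<Sum>\<theta>\<in>{\<phi>, \<psi>}. size \<theta>)"
      by (rule sum.union_inter) (use fin in auto)
    then show ?thesis by linarith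
  qed
  also have "(\<Sum>\<theta>\<in>{\<phi>, \<psi>}. size \<theta>) \<le> size \<phi> + size \<psi>"
    by (cases "\<phi> = \<psi>") auto
  also have "(\<Sum>\<theta>\<in>supp f - {?I}. size \<theta>) + (size \<phi> + size \<psi>) < (\<Sum>\<theta>\<in>supp f - {?I}. size \<theta>) + size ?I"
    by simp
  also have "\<dots> = msr f" unfolding msr_def using fin Iin by (simp add: sum.remove)
  finally show "msr ?f' < msr f" by simp
  let ?X = "supp f \<union> {\<phi>, \<psi>}"
  have finX: "finite ?X" using fin by simp
  have "fval W R V ?f' x = (\<Sum>\<theta>\<in>?X. ?f' \<theta> * eval W R V \<theta> x)"
    by (rule fval_superset[OF finX]) (use sub in auto)
  also have "\<dots> = (\<Sum>\<theta>\<in>?X. f \<theta> * eval W R V \<theta> x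
      - (if \<theta> = ?I then f ?I * eval W R V \<theta> x else 0)
      + (if \<theta> = \<psi> then f ?I * eval W R V \<theta> x else 0)
      - (if \<theta> = \<phi> then f ?I * eval W R V \<theta> x else 0))"
    by (intro sum.cong refl) (auto simp: impstep_def algebra_simps)
  also have "\<dots> = (\<Sum>\<theta>\<in>?X. f \<theta> * eval W R V \<theta> x)
      - (\<Sum>\<theta>\<in>?X. if \<theta> = ?I then f ?I * eval W R V \<theta> x else 0)
      + (\<Sum>\<theta>\<in>?X. if \<theta> = \<psi> then f ?I * eval W R V \<theta> x else 0)
      - (\<Sum>\<theta>\<in>?X. if \<theta> = \<phi> then f ?I * eval W R V \<theta> x else 0)"
    by (simp only: sum.distrib sum_subtractf)
  also have "\<dots> = (\<Sum>\<theta>\<in>?X. f \<theta> * eval W R V \<theta> x) - f ?I * eval W R V ?I x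
      + f ?I * eval W R V \<psi> x - f ?I * eval W R V \<phi> x"
    using finX Iin by (simp add: sum.delta)
  also have "\<dots> = (\<Sum>\<theta>\<in>?X. f \<theta> * eval W R V \<theta> x)" by (simp add: algebra_simps)
  also have "\<dots> = fval W R V f x"
    by (rule fval_superset[symmetric, OF finX]) auto
  finally show "fval W R V ?f' x = fval W R V f x" .
qed

lemma valid_rd:
  assumes "finite (supp f)" "fvalid f"
  shows "rd UNIV f"
  using assms
proof (induction "msr f" arbitrary: f rule: less_induct)
  case less
  note fin = less.prems(1) and val = less.prems(2)
  show ?case
  proof (cases "\<exists>\<phi> \<psi>. f (Imp \<phi> \<psi>) \<noteq> 0")
    case True
    then obtain \<phi> \<psi> where nz: "f (Imp \<phi> \<psi>) \<noteq> 0" by blast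
    note ip = impstep_props[OF fin nz]
    have "fvalid (impstep f \<phi> \<psi>)" using val unfolding fvalid_def by (simp add: ip(3))
    then have "rd UNIV (impstep f \<phi> \<psi>)" using less.hyps[OF ip(2) ip(1)] by blast
    then show ?thesis using fin by (rule rd.rimp) simp
  next
    case False
    then have noimp: "\<forall>a b. f (Imp a b) = 0" by blast
    have novar: "\<forall>p. f (Var p) = 0" using fvalid_atoms[OF val fin noimp] by blast
    define Z where "Z = {\<theta>. f (Box \<theta>) \<noteq> 0}"
    have Zv: "Z = Box -` supp f" by (auto simp: Z_def supp_def)
    have inj_Box: "inj_on Box Z" by (simp add: inj_on_def)
    have finZ: "finite Z" unfolding Zv by (rule finite_vimageI[OF fin]) (simp add: inj_on_def)
    have suppZ: "supp f = Box ` Z"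
    proof
      show "supp f \<subseteq> Box ` Z"
      proof
        fix \<theta> assume "\<theta> \<in> supp f"
        then show "\<theta> \<in> Box ` Z" using noimp novar by (cases \<theta>) (auto simp: supp_def Z_def)
      qed
      show "Box ` Z \<subseteq> supp f" by (auto simp: supp_def Z_def)
    qed
    show ?thesis
    proof (cases "Z = {}")
      case True
      then have f0: "f \<theta> = 0" for \<theta> using suppZ by (auto simp: supp_def)
      show ?thesis
        by (rule rd.rbox[where S="{}" and c="\<lambda>_. 0" and d="\<lambda>_. 0" and \<mu>="\<lambda>_ _. 0"]) (auto simp: f0 fin)
    next
      case False
      define c where "c \<theta> = max (f (Box \<theta>)) 0" for \<theta>
      define d where "d \<theta> = max (- f (Box \<theta>)) 0" for \<theta>
      define P where "P = {\<theta>. f (Box \<theta>) > 0}"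
      define S where "S = insert (Var 0) P"
      define D where "D = {\<theta>. f (Box \<theta>) < 0}"
      have PZ: "P \<subseteq> Z" and DZ: "D \<subseteq> Z" by (auto simp: P_def D_def Z_def)
      have finP: "finite P" and finD: "finite D" using PZ DZ finZ by (auto intro: finite_subset)
      have finS: "finite S" and neS: "S \<noteq> {}" using finP by (auto simp: S_def)
      have PS: "P \<subseteq> S" by (auto simp: S_def)
      have c0: "\<forall>\<psi>. c \<psi> \<ge> 0" and d0: "\<forall>\<phi>. d \<phi> \<ge> 0" by (auto simp: c_def d_def)
      have cP: "c \<theta> = 0" if "\<theta> \<notin> P" for \<theta> using that by (auto simp: c_def P_def)
      have dD: "d \<theta> = 0" if "\<theta> \<notin> D" for \<theta> using that by (auto simp: d_def D_def)
      have fcd: "f (Box \<theta>) = c \<theta> - d \<theta>" for \<theta> by (auto simp: c_def d_def max_def)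
      have hyp: "(\<Sum>\<phi>\<in>D. d \<phi> * Min ((\<lambda>\<psi>. ev \<phi> (T \<psi>)) ` S)) \<le> (\<Sum>\<psi>\<in>S. c \<psi> * ev \<psi> (T \<psi>))"
        if ok: "\<forall>\<psi>\<in>S. pm_ok (T \<psi>)" for T
      proof -
        define M where "M \<chi> = Min ((\<lambda>\<psi>. ev \<chi> (T \<psi>)) ` S)" for \<chi>
        have m: "is_model (uW S T) (uR S T) (uV T)" by (rule u_model[OF finS ok])
        have "0 \<le> fval (uW S T) (uR S T) (uV T) f 0" by (rule fvalidD[OF val m zero_in_uW])
        also have "\<dots> = (\<Sum>\<theta>\<in>Box ` Z. f \<theta> * eval (uW S T) (uR S T) (uV T) \<theta> 0)"
          unfolding fval_def suppZ ..
        also have "\<dots> = (\<Sum>\<chi>\<in>Z. f (Box \<chi>) * eval (uW S T) (uR S T) (uV T) (Box \<chi>) 0)"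
          by (simp only: sum.reindex[OF inj_Box] comp_def)
        also have "\<dots> = (\<Sum>\<chi>\<in>Z. f (Box \<chi>) * M \<chi>)"
          by (intro sum.cong refl) (simp only: M_def u_root_Box[OF finS neS ok])
        also have "\<dots> = (\<Sum>\<chi>\<in>Z. c \<chi> * M \<chi>) - (\<Sum>\<chi>\<in>Z. d \<chi> * M \<chi>)"
          by (simp add: fcd left_diff_distrib sum_subtractf)
        also have "(\<Sum>\<chi>\<in>Z. d \<chi> * M \<chi>) = (\<Sum>\<chi>\<in>D. d \<chi> * M \<chi>)"
          using finZ DZ dD by (intro sum.mono_neutral_right) auto
        also have "(\<Sum>\<chi>\<in>Z. c \<chi> * M \<chi>) \<le> (\<Sum>\<chi>\<in>Z. c \<chi> * ev \<chi> (T \<chi>))"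
        proof (rule sum_mono)
          fix \<chi> assume "\<chi> \<in> Z"
          show "c \<chi> * M \<chi> \<le> c \<chi> * ev \<chi> (T \<chi>)"
          proof (cases "\<chi> \<in> P")
            case True
            then have "\<chi> \<in> S" using PS by blast
            then have "M \<chi> \<le> ev \<chi> (T \<chi>)" unfolding M_def using finS by (intro Min_le) auto
            then show ?thesis using c0 by (intro mult_left_mono) auto
          next
            case False then show ?thesis by (simp add: cP)
          qed
        qed
        also have "(\<Sum>\<chi>\<in>Z. c \<chi> * ev \<chi> (T \<chi>)) = (\<Sum>\<chi>\<in>P. c \<chi> * ev \<chi> (T \<chi>))"
          using finZ PZ cP by (intro sum.mono_neutral_right) auto
        also have "\<dots> = (\<Sum>\<chi>\<in>S. c \<chi> * ev \<chi> (T \<chi>))"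
          using finS PS cP by (intro sum.mono_neutral_left) auto
        finally show ?thesis unfolding M_def by linarith
      qed
      obtain \<mu>0 where mpos: "\<forall>\<phi>\<in>D. \<forall>\<psi>\<in>S. \<mu>0 \<phi> \<psi> \<ge> 0" and mrow: "\<forall>\<phi>\<in>D. (\<Sum>\<psi>\<in>S. \<mu>0 \<phi> \<psi>) = d \<phi>"
        and mch: "\<forall>\<psi>\<in>S. \<forall>t. pm_ok t \<longrightarrow> (\<Sum>\<phi>\<in>D. \<mu>0 \<phi> \<psi> * ev \<phi> t) \<le> c \<psi> * ev \<psi> t"
        using box_core[OF finS neS finD c0 d0 hyp] by blast
      define \<mu> where "\<mu> \<theta> \<psi> = (if \<theta> \<in> D \<and> \<psi> \<in> S then \<mu>0 \<theta> \<psi> else 0)" for \<theta> \<psi>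
      have children: "rd UNIV (child c \<mu> \<psi>)" if \<psi>S: "\<psi> \<in> S" for \<psi>
      proof -
        let ?g = "child c \<mu> \<psi>"
        have sg: "supp ?g \<subseteq> Z"
        proof
          fix \<theta> assume "\<theta> \<in> supp ?g"
          then have "(\<theta> = \<psi> \<and> c \<psi> \<noteq> 0) \<or> \<mu> \<theta> \<psi> \<noteq> 0"
            by (auto simp: supp_def child_def split: if_splits)
          then show "\<theta> \<in> Z"
          proof
            assume "\<theta> = \<psi> \<and> c \<psi> \<noteq> 0" then show ?thesis using PZ cP by blast
          next
            assume "\<mu> \<theta> \<psi> \<noteq> 0" then show ?thesis using DZ by (auto simp: \<mu>_def split: if_splits)
          qed
        qed
        have fing: "finite (supp ?g)" using sg finZ by (rule finite_subset)
        have "msr ?g \<le> (\<Sum>\<theta>\<in>Z. size \<theta>)" unfolding msr_def using sg finZ by (intro sum_mono2) auto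
        also have "\<dots> < (\<Sum>\<theta>\<in>Z. size (Box \<theta>))" using finZ False by (intro sum_strict_mono) auto
        also have "\<dots> = msr f" unfolding msr_def suppZ by (subst sum.reindex) (auto simp: inj_on_def)
        finally have lt: "msr ?g < msr f" .
        have vg: "fvalid ?g"
          unfolding fvalid_def
        proof (intro allI impI ballI)
          fix W R V x assume m: "is_model W R V" and x: "x \<in> W"
          let ?e = "\<lambda>\<theta>. eval W R V \<theta> x"
          let ?X = "insert \<psi> D"
          have sX: "supp ?g \<subseteq> ?X" by (auto simp: supp_def child_def \<mu>_def split: if_splits)
          have "fval W R V ?g x = (\<Sum>\<theta>\<in>?X. ?g \<theta> * ?e \<theta>)" by (rule fval_superset[OF _ sX]) (use finD in simp)
          also have "\<dots> = (\<Sum>\<theta>\<in>?X. (if \<theta> = \<psi> then c \<psi> * ?e \<theta> else 0) - \<mu> \<theta> \<psi> * ?e \<theta>)"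
            by (intro sum.cong refl) (auto simp: child_def algebra_simps)
          also have "\<dots> = c \<psi> * ?e \<psi> - (\<Sum>\<theta>\<in>?X. \<mu> \<theta> \<psi> * ?e \<theta>)"
            using finD by (simp add: sum_subtractf sum.delta)
          also have "(\<Sum>\<theta>\<in>?X. \<mu> \<theta> \<psi> * ?e \<theta>) = (\<Sum>\<theta>\<in>D. \<mu>0 \<theta> \<psi> * ?e \<theta>)"
          proof -
            have "(\<Sum>\<theta>\<in>?X. \<mu> \<theta> \<psi> * ?e \<theta>) = (\<Sum>\<theta>\<in>D. \<mu> \<theta> \<psi> * ?e \<theta>)"
              using finD by (intro sum.mono_neutral_right) (auto simp: \<mu>_def)
            also have "\<dots> = (\<Sum>\<theta>\<in>D. \<mu>0 \<theta> \<psi> * ?e \<theta>)" using \<psi>S by (intro sum.cong refl) (auto simp: \<mu>_def)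
            finally show ?thesis .
          qed
          finally have "fval W R V ?g x = c \<psi> * ?e \<psi> - (\<Sum>\<theta>\<in>D. \<mu>0 \<theta> \<psi> * ?e \<theta>)" .
          moreover have "(\<Sum>\<theta>\<in>D. \<mu>0 \<theta> \<psi> * ?e \<theta>) \<le> c \<psi> * ?e \<psi>"
            using mch \<psi>S pm_okI[OF m x] by fastforce
          ultimately show "0 \<le> fval W R V ?g x" by simp
        qed
        show ?thesis using less.hyps[OF lt fing vg] by blast
      qed
      show ?thesis
      proof (rule rd.rbox[where S=S and c=c and d=d and \<mu>=\<mu>])
        show "finite S" by (rule finS)
        show "finite (supp f)" by (rule fin)
        show "\<forall>\<theta>. f \<theta> \<in> UNIV" by simp
        show "\<forall>p. f (Var p) = 0" by (rule novar)
        show "\<forall>a b. f (Imp a b) = 0" by (rule noimp)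
        show "\<forall>\<theta>. f (Box \<theta>) = c \<theta> - d \<theta>" by (simp add: fcd)
        show "\<forall>\<theta>. 0 \<le> c \<theta> \<and> 0 \<le> d \<theta> \<and> (c \<theta> = 0 \<or> d \<theta> = 0)" by (auto simp: c_def d_def max_def)
        show "\<forall>\<theta>. \<theta> \<notin> S \<longrightarrow> c \<theta> = 0" using cP PS by blast
        show "\<forall>\<theta> \<psi>. 0 \<le> \<mu> \<theta> \<psi>" using mpos by (auto simp: \<mu>_def)
        show "\<forall>\<theta> \<psi>. \<psi> \<notin> S \<longrightarrow> \<mu> \<theta> \<psi> = 0" by (auto simp: \<mu>_def)
        show "\<forall>\<theta>. (\<Sum>\<psi>\<in>S. \<mu> \<theta> \<psi>) = d \<theta>"
        proof
          fix \<theta> show "(\<Sum>\<psi>\<in>S. \<mu> \<theta> \<psi>) = d \<theta>"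
          proof (cases "\<theta> \<in> D")
            case True then show ?thesis using mrow by (simp add: \<mu>_def)
          next
            case False then show ?thesis by (simp add: \<mu>_def dD)
          qed
        qed
        show "\<forall>\<theta>. c \<theta> \<in> UNIV \<and> d \<theta> \<in> UNIV" by simp
        show "\<forall>\<theta> \<psi>. \<mu> \<theta> \<psi> \<in> UNIV" by simp
        show "\<forall>\<psi>\<in>S. rd UNIV (child c \<mu> \<psi>)" using children by blast
      qed
    qed
  qed
qed

section \<open>Q-linear maps\<close>

definition qlin :: "(real \<Rightarrow> real) \<Rightarrow> bool" where
  "qlin g \<longleftrightarrow> (\<forall>x y. g (x + y) = g x + g y) \<and> (\<forall>q x. q \<in> \<rat> \<longrightarrow> g (q * x) = q * g x)"

lemma qlin_add: "qlin g \<Longrightarrow> g (x + y) = g x + g y" unfolding qlin_def by blast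
lemma qlin_zero: "qlin g \<Longrightarrow> g 0 = 0" using qlin_add[of g 0 0] by simp
lemma qlin_neg: "qlin g \<Longrightarrow> g (- x) = - g x" using qlin_add[of g x "- x"] qlin_zero[of g] by simp
lemma qlin_diff: "qlin g \<Longrightarrow> g (x - y) = g x - g y" using qlin_add[of g x "- y"] qlin_neg[of g y] by simp
lemma qlin_sum: "qlin g \<Longrightarrow> g (\<Sum>i\<in>I. h i) = (\<Sum>i\<in>I. g (h i))"
  by (induction I rule: infinite_finite_induct) (auto simp: qlin_zero qlin_add)
lemma qlin_if: "qlin g \<Longrightarrow> g (if P then x else 0) = (if P then g x else 0)"
  by (simp add: qlin_zero)

interpretation Qv: vector_space "\<lambda>(q::rat) (x::real). of_rat q * x"
  by unfold_locales (auto simp: algebra_simps of_rat_add of_rat_mult)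

interpretation QQ: vector_space_pair "\<lambda>(q::rat) (x::real). of_rat q * x" "\<lambda>(q::rat) (x::real). of_rat q * x"
  by unfold_locales

lemma exists_qmap:
  assumes finA: "finite A"
  shows "\<exists>g. qlin g \<and> g 1 = 1 \<and> (\<forall>x\<in>A. 0 < x \<longrightarrow> 0 < g x) \<and> (\<forall>x\<in>A. g x \<in> \<rat>)"
proof -
  have ind1: "Qv.independent {1::real}" by simp
  obtain B where B: "{1} \<subseteq> B" "B \<subseteq> insert 1 A" "Qv.independent B" "insert 1 A \<subseteq> Qv.span B"
    using Qv.maximal_independent_subset_extend[OF _ ind1, of "insert 1 A"] by auto
  have finB: "finite B" by (rule finite_subset[OF B(2)]) (simp add: finA)
  have "\<forall>x\<in>A. \<exists>r. x = (\<Sum>b\<in>B. of_rat (r b) * b)"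
  proof
    fix x assume "x \<in> A"
    then have "x \<in> Qv.span B" using B(4) by blast
    then show "\<exists>r. x = (\<Sum>b\<in>B. of_rat (r b) * b)" unfolding Qv.span_finite[OF finB] by auto
  qed
  then obtain r where r: "\<And>x. x \<in> A \<Longrightarrow> x = (\<Sum>b\<in>B. of_rat (r x b) * b)" by metis
  define M where "M = 1 + (\<Sum>x\<in>A. \<Sum>b\<in>B. \<bar>of_rat (r x b) :: real\<bar>)"
  have M1: "M \<ge> 1" unfolding M_def by (simp add: sum_nonneg)
  define \<delta> where "\<delta> = Min (insert 1 {x\<in>A. 0 < x})"
  have \<delta>pos: "\<delta> > 0" unfolding \<delta>_def using finA by (subst Min_gr_iff) auto
  have \<delta>le: "\<delta> \<le> x" if "x \<in> A" "0 < x" for x unfolding \<delta>_def using finA that by (intro Min_le) auto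
  define \<epsilon> where "\<epsilon> = \<delta> / M"
  have \<epsilon>pos: "\<epsilon> > 0" using \<delta>pos M1 by (simp add: \<epsilon>_def)
  have "\<forall>b. \<exists>q\<in>\<rat>. b < q \<and> q < b + \<epsilon>" using \<epsilon>pos by (auto intro: Rats_dense_in_real)
  then obtain qa where qa: "\<And>b. qa b \<in> \<rat> \<and> b < qa b \<and> qa b < b + \<epsilon>" by metis
  define h where "h b = (if b = 1 then 1 else qa b)" for b :: real
  have hQ: "h b \<in> \<rat>" for b using qa[of b] by (simp add: h_def)
  have hb: "\<bar>h b - b\<bar> \<le> \<epsilon>" for b using qa[of b] \<epsilon>pos by (auto simp: h_def)
  obtain g where lin: "Vector_Spaces.linear (\<lambda>(q::rat) (x::real). of_rat q * x) (\<lambda>(q::rat) (x::real). of_rat q * x) g"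
    and gB: "\<forall>b\<in>B. g b = h b"
    using QQ.linear_independent_extend[OF B(3), of h] by blast
  interpret L: Vector_Spaces.linear "\<lambda>(q::rat) (x::real). of_rat q * x" "\<lambda>(q::rat) (x::real). of_rat q * x" g by (rule lin)
  have ql: "qlin g"
    unfolding qlin_def
  proof (intro conjI allI impI)
    fix x y show "g (x + y) = g x + g y" by (rule L.add)
  next
    fix q x :: real assume "q \<in> \<rat>"
    then obtain q' where "q = of_rat q'" by (auto elim: Rats_cases)
    then show "g (q * x) = q * g x" using L.scale[of q' x] by simp
  qed
  have g1: "g 1 = 1" using gB B(1) by (simp add: h_def)
  have gx: "g x = (\<Sum>b\<in>B. of_rat (r x b) * h b)" if "x \<in> A" for x
  proof -
    have "g x = g (\<Sum>b\<in>B. of_rat (r x b) * b)" using r[OF that] by simp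
    also have "\<dots> = (\<Sum>b\<in>B. of_rat (r x b) * g b)" by (simp add: L.sum L.scale)
    also have "\<dots> = (\<Sum>b\<in>B. of_rat (r x b) * h b)" using gB by simp
    finally show ?thesis .
  qed
  have gQ: "g x \<in> \<rat>" if "x \<in> A" for x
    unfolding gx[OF that] by (intro Rats_sum ballI Rats_mult) (auto simp: hQ)
  have gpos: "0 < g x" if "x \<in> A" "0 < x" for x
  proof -
    have "\<bar>g x - x\<bar> = \<bar>\<Sum>b\<in>B. of_rat (r x b) * (h b - b)\<bar>"
      using gx[OF that(1)] r[OF that(1)] by (simp add: algebra_simps sum_subtractf)
    also have "\<dots> \<le> (\<Sum>b\<in>B. \<bar>of_rat (r x b) * (h b - b)\<bar>)" by (rule sum_abs)
    also have "\<dots> \<le> (\<Sum>b\<in>B. \<bar>of_rat (r x b) :: real\<bar> * \<epsilon>)"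
      by (intro sum_mono) (simp add: abs_mult mult_left_mono hb)
    also have "\<dots> = (\<Sum>b\<in>B. \<bar>of_rat (r x b) :: real\<bar>) * \<epsilon>" by (simp add: sum_distrib_right)
    also have "\<dots> \<le> (M - 1) * \<epsilon>"
    proof -
      have "(\<Sum>b\<in>B. \<bar>of_rat (r x b) :: real\<bar>) \<le> (\<Sum>x\<in>A. \<Sum>b\<in>B. \<bar>of_rat (r x b) :: real\<bar>)"
        using finA that(1) by (intro member_le_sum) (auto simp: sum_nonneg)
      then show ?thesis using \<epsilon>pos unfolding M_def by (intro mult_right_mono) auto
    qed
    also have "\<dots> < M * \<epsilon>" using \<epsilon>pos by simp
    also have "\<dots> = \<delta>" using M1 by (simp add: \<epsilon>_def)
    also have "\<dots> \<le> x" by (rule \<delta>le[OF that])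
    finally show ?thesis by linarith
  qed
  show ?thesis using ql g1 gpos gQ by blast
qed

lemma rd_qmap:
  assumes "rd UNIV f"
  shows "\<exists>A. finite A \<and> (\<forall>\<theta>. f \<theta> \<noteq> 0 \<longrightarrow> f \<theta> \<in> A) \<and>
     (\<forall>g. qlin g \<longrightarrow> (\<forall>x\<in>A. 0 < x \<longrightarrow> 0 < g x) \<longrightarrow> (\<forall>x\<in>A. g x \<in> \<rat>) \<longrightarrow> rd \<rat> (\<lambda>\<theta>. g (f \<theta>)))"
  using assms
proof (induction rule: rd.induct)
  case (rimp f \<phi> \<psi>)
  from rimp.IH obtain A where A: "finite A" "\<forall>\<theta>. impstep f \<phi> \<psi> \<theta> \<noteq> 0 \<longrightarrow> impstep f \<phi> \<psi> \<theta> \<in> A"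
    "\<forall>g. qlin g \<longrightarrow> (\<forall>x\<in>A. 0 < x \<longrightarrow> 0 < g x) \<longrightarrow> (\<forall>x\<in>A. g x \<in> \<rat>) \<longrightarrow> rd \<rat> (\<lambda>\<theta>. g (impstep f \<phi> \<psi> \<theta>))"
    by blast
  define A' where "A' = A \<union> f ` supp f"
  show ?case
  proof (intro exI[of _ A'] conjI allI impI)
    show "finite A'" using A(1) rimp.hyps(2) by (simp add: A'_def)
    show "f \<theta> \<in> A'" if "f \<theta> \<noteq> 0" for \<theta> using that by (auto simp: A'_def supp_def)
    fix g assume g: "qlin g" and gp: "\<forall>x\<in>A'. 0 < x \<longrightarrow> 0 < g x" and gq: "\<forall>x\<in>A'. g x \<in> \<rat>"
    have "rd \<rat> (\<lambda>\<theta>. g (impstep f \<phi> \<psi> \<theta>))" using A(3) g gp gq by (auto simp: A'_def)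
    moreover have "(\<lambda>\<theta>. g (impstep f \<phi> \<psi> \<theta>)) = impstep (\<lambda>\<theta>. g (f \<theta>)) \<phi> \<psi>"
      unfolding impstep_def by (simp add: qlin_diff[OF g] qlin_add[OF g] qlin_if[OF g])
    ultimately have r: "rd \<rat> (impstep (\<lambda>\<theta>. g (f \<theta>)) \<phi> \<psi>)" by simp
    have fs: "finite (supp (\<lambda>\<theta>. g (f \<theta>)))"
      by (rule finite_subset[OF _ rimp.hyps(2)]) (auto simp: supp_def qlin_zero[OF g])
    have vq: "\<forall>\<theta>. g (f \<theta>) \<in> \<rat>"
    proof
      fix \<theta> show "g (f \<theta>) \<in> \<rat>"
      proof (cases "f \<theta> = 0")
        case True then show ?thesis by (simp add: qlin_zero[OF g])
      next
        case False then show ?thesis using gq by (auto simp: A'_def supp_def)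
      qed
    qed
    show "rd \<rat> (\<lambda>\<theta>. g (f \<theta>))" by (rule rd.rimp[OF r fs vq])
  qed
next
  case (rbox S f c d \<mu>)
  note h = rbox.hyps
  let ?P = "\<lambda>f A. finite A \<and> (\<forall>\<theta>. f \<theta> \<noteq> 0 \<longrightarrow> f \<theta> \<in> A) \<and>
     (\<forall>g. qlin g \<longrightarrow> (\<forall>x\<in>A. 0 < x \<longrightarrow> 0 < g x) \<longrightarrow> (\<forall>x\<in>A. g x \<in> \<rat>) \<longrightarrow> rd \<rat> (\<lambda>\<theta>. g (f \<theta>)))"
  have "\<forall>\<psi>\<in>S. \<exists>A. ?P (child c \<mu> \<psi>) A" using rbox.IH by blast
  from bchoice[OF this] obtain Af where Af': "\<forall>\<psi>\<in>S. ?P (child c \<mu> \<psi>) (Af \<psi>)" by (elim exE)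
  then have Af: "\<And>\<psi>. \<psi> \<in> S \<Longrightarrow> ?P (child c \<mu> \<psi>) (Af \<psi>)" by (rule bspec)
  define Dset where "Dset = {\<theta>. d \<theta> \<noteq> 0}"
  have Dsub: "Dset \<subseteq> Box -` supp f"
  proof
    fix \<theta> assume "\<theta> \<in> Dset"
    then have "d \<theta> \<noteq> 0" by (simp add: Dset_def)
    then have "c \<theta> = 0" using h(7) by blast
    then have "f (Box \<theta>) \<noteq> 0" using h(6) \<open>d \<theta> \<noteq> 0\<close> by simp
    then show "\<theta> \<in> Box -` supp f" by (simp add: supp_def)
  qed
  have finD: "finite Dset"
    by (rule finite_subset[OF Dsub finite_vimageI[OF h(2)]]) (simp add: inj_on_def)
  have cS: "c \<theta> \<noteq> 0 \<Longrightarrow> \<theta> \<in> S" for \<theta> using h(8) by blast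
  have \<mu>nz: "\<mu> \<theta> \<psi> \<noteq> 0 \<Longrightarrow> \<psi> \<in> S \<and> \<theta> \<in> Dset" for \<theta> \<psi>
  proof -
    assume nz: "\<mu> \<theta> \<psi> \<noteq> 0"
    then have \<psi>S: "\<psi> \<in> S" using h(10) by blast
    have "d \<theta> \<noteq> 0"
    proof
      assume "d \<theta> = 0"
      then have "(\<Sum>\<psi>\<in>S. \<mu> \<theta> \<psi>) = 0" using h(11) by simp
      then have "\<forall>\<psi>\<in>S. \<mu> \<theta> \<psi> = 0" using h(1) h(9) by (simp add: sum_nonneg_eq_0_iff)
      then show False using nz \<psi>S by blast
    qed
    then show ?thesis using \<psi>S by (simp add: Dset_def)
  qed
  define A' where "A' = (\<Union>\<psi>\<in>S. Af \<psi>) \<union> f ` supp f \<union> c ` S \<union> d ` Dset \<union> (\<lambda>p. \<mu> (fst p) (snd p)) ` (Dset \<times> S)"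
  show ?case
  proof (intro exI[of _ A'] conjI allI impI)
    have fAf: "\<forall>\<psi>\<in>S. finite (Af \<psi>)" using Af by blast
    show "finite A'" unfolding A'_def using h(1) h(2) finD fAf
      by (intro finite_UnI finite_imageI finite_UN_I finite_cartesian_product) auto
    show "f \<theta> \<in> A'" if "f \<theta> \<noteq> 0" for \<theta> using that by (auto simp: A'_def supp_def)
    fix g assume g: "qlin g" and gp: "\<forall>x\<in>A'. 0 < x \<longrightarrow> 0 < g x" and gq: "\<forall>x\<in>A'. g x \<in> \<rat>"
    have g0: "g 0 = 0" by (rule qlin_zero[OF g])
    have gnn: "0 \<le> g y" if "y \<in> A' \<or> y = 0" "0 \<le> y" for y
      using that gp g0 by (cases "y = 0") auto
    have gQ: "g y \<in> \<rat>" if "y \<in> A' \<or> y = 0" for y using that gq g0 by auto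
    have cA: "c \<theta> \<in> A' \<or> c \<theta> = 0" for \<theta> using cS by (auto simp: A'_def)
    have dA: "d \<theta> \<in> A' \<or> d \<theta> = 0" for \<theta> by (auto simp: A'_def Dset_def)
    have \<mu>A: "\<mu> \<theta> \<psi> \<in> A' \<or> \<mu> \<theta> \<psi> = 0" for \<theta> \<psi>
      using \<mu>nz[of \<theta> \<psi>] unfolding A'_def by (auto intro!: image_eqI[of _ _ "(\<theta>,\<psi>)"])
    have fA: "f \<theta> \<in> A' \<or> f \<theta> = 0" for \<theta> by (auto simp: A'_def supp_def)
    have childeq: "child (\<lambda>\<theta>. g (c \<theta>)) (\<lambda>\<theta> \<psi>. g (\<mu> \<theta> \<psi>)) \<psi> = (\<lambda>\<theta>. g (child c \<mu> \<psi> \<theta>))" for \<psi>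
      unfolding child_def by (simp add: qlin_diff[OF g] qlin_if[OF g])
    show "rd \<rat> (\<lambda>\<theta>. g (f \<theta>))"
    proof (rule rd.rbox[where S=S and c="\<lambda>\<theta>. g (c \<theta>)" and d="\<lambda>\<theta>. g (d \<theta>)" and \<mu>="\<lambda>\<theta> \<psi>. g (\<mu> \<theta> \<psi>)"])
      show "finite S" by (rule h(1))
      show "finite (supp (\<lambda>\<theta>. g (f \<theta>)))"
        by (rule finite_subset[OF _ h(2)]) (auto simp: supp_def g0)
      show "\<forall>\<theta>. g (f \<theta>) \<in> \<rat>" using gQ[OF fA] by blast
      show "\<forall>p. g (f (Var p)) = 0" using h(4) g0 by simp
      show "\<forall>a b. g (f (Imp a b)) = 0" using h(5) g0 by simp
      show "\<forall>\<theta>. g (f (Box \<theta>)) = g (c \<theta>) - g (d \<theta>)" using h(6) by (simp add: qlin_diff[OF g])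
      show "\<forall>\<theta>. 0 \<le> g (c \<theta>) \<and> 0 \<le> g (d \<theta>) \<and> (g (c \<theta>) = 0 \<or> g (d \<theta>) = 0)"
      proof
        fix \<theta>
        have "0 \<le> c \<theta>" "0 \<le> d \<theta>" "c \<theta> = 0 \<or> d \<theta> = 0" using h(7) by auto
        then show "0 \<le> g (c \<theta>) \<and> 0 \<le> g (d \<theta>) \<and> (g (c \<theta>) = 0 \<or> g (d \<theta>) = 0)"
          using gnn[OF cA] gnn[OF dA] g0 by auto
      qed
      show "\<forall>\<theta>. \<theta> \<notin> S \<longrightarrow> g (c \<theta>) = 0" using h(8) g0 by simp
      show "\<forall>\<theta> \<psi>. 0 \<le> g (\<mu> \<theta> \<psi>)"
      proof (intro allI)
        fix \<theta> \<psi> show "0 \<le> g (\<mu> \<theta> \<psi>)" using gnn[OF \<mu>A] h(9) by blast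
      qed
      show "\<forall>\<theta> \<psi>. \<psi> \<notin> S \<longrightarrow> g (\<mu> \<theta> \<psi>) = 0" using h(10) g0 by simp
      show "\<forall>\<theta>. (\<Sum>\<psi>\<in>S. g (\<mu> \<theta> \<psi>)) = g (d \<theta>)"
      proof
        fix \<theta>
        have "(\<Sum>\<psi>\<in>S. g (\<mu> \<theta> \<psi>)) = g (\<Sum>\<psi>\<in>S. \<mu> \<theta> \<psi>)" by (rule qlin_sum[OF g, symmetric])
        then show "(\<Sum>\<psi>\<in>S. g (\<mu> \<theta> \<psi>)) = g (d \<theta>)" using h(11) by simp
      qed
      show "\<forall>\<theta>. g (c \<theta>) \<in> \<rat> \<and> g (d \<theta>) \<in> \<rat>" using gQ[OF cA] gQ[OF dA] by blast
      show "\<forall>\<theta> \<psi>. g (\<mu> \<theta> \<psi>) \<in> \<rat>" using gQ[OF \<mu>A] by blast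
      show "\<forall>\<psi>\<in>S. rd \<rat> (child (\<lambda>\<theta>. g (c \<theta>)) (\<lambda>\<theta> \<psi>. g (\<mu> \<theta> \<psi>)) \<psi>)"
      proof
        fix \<psi> assume \<psi>S: "\<psi> \<in> S"
        have sub: "Af \<psi> \<subseteq> A'" using \<psi>S unfolding A'_def by blast
        have H: "\<forall>g. qlin g \<longrightarrow> (\<forall>x\<in>Af \<psi>. 0 < x \<longrightarrow> 0 < g x) \<longrightarrow> (\<forall>x\<in>Af \<psi>. g x \<in> \<rat>)
            \<longrightarrow> rd \<rat> (\<lambda>\<theta>. g (child c \<mu> \<psi> \<theta>))" by (rule conjunct2[OF conjunct2[OF Af[OF \<psi>S]]])
        have p1: "\<forall>x\<in>Af \<psi>. 0 < x \<longrightarrow> 0 < g x" using gp sub by blast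
        have p2: "\<forall>x\<in>Af \<psi>. g x \<in> \<rat>" using gq sub by blast
        have "rd \<rat> (\<lambda>\<theta>. g (child c \<mu> \<psi> \<theta>))" using H g p1 p2 by (elim allE impE) (assumption+)
        then show "rd \<rat> (child (\<lambda>\<theta>. g (c \<theta>)) (\<lambda>\<theta> \<psi>. g (\<mu> \<theta> \<psi>)) \<psi>)" by (simp add: childeq)
      qed
    qed
  qed
qed

lemma der_empty: "derivable {#} {#}" by (rule derivable.id)

lemma der_mix: "derivable \<Gamma> \<Delta> \<Longrightarrow> derivable \<Pi> \<Sigma> \<Longrightarrow> derivable (\<Gamma> + \<Pi>) (\<Delta> + \<Sigma>)"
  using derivable.mix[of \<Gamma> \<Delta> \<Pi> \<Sigma>] by (simp add: add.commute)

lemma der_rep: "derivable \<Gamma> \<Delta> \<Longrightarrow> derivable (repeat_mset k \<Gamma>) (repeat_mset k \<Delta>)"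
proof (induction k)
  case 0 then show ?case by (simp add: der_empty)
next
  case (Suc k)
  then have "derivable (\<Gamma> + repeat_mset k \<Gamma>) (\<Delta> + repeat_mset k \<Delta>)" by (intro der_mix) auto
  then show ?case by simp
qed

lemma der_sum: "finite S \<Longrightarrow> (\<forall>\<psi>\<in>S. derivable (L \<psi>) (R \<psi>)) \<Longrightarrow> derivable (\<Sum>\<psi>\<in>S. L \<psi>) (\<Sum>\<psi>\<in>S. R \<psi>)"
proof (induction S rule: finite_induct)
  case empty then show ?case by (simp add: der_empty)
next
  case (insert x F)
  then have "derivable (L x + (\<Sum>\<psi>\<in>F. L \<psi>)) (R x + (\<Sum>\<psi>\<in>F. R \<psi>))" by (intro der_mix) auto
  then show ?case using insert.hyps by simp
qed

lemma der_addid: "derivable \<Gamma> \<Delta> \<Longrightarrow> derivable (\<Gamma> + X) (\<Delta> + X)"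
  using der_mix[OF _ derivable.id[of X]] by simp

lemma der_impR:
  "derivable (\<Gamma> + replicate_mset k \<phi>) (replicate_mset k \<psi> + \<Delta>) \<Longrightarrow> derivable \<Gamma> (replicate_mset k (Imp \<phi> \<psi>) + \<Delta>)"
proof (induction k arbitrary: \<Delta>)
  case 0 then show ?case by simp
next
  case (Suc k)
  have "derivable ((\<Gamma> + replicate_mset k \<phi>) + {#\<phi>#}) ({#\<psi>#} + (replicate_mset k \<psi> + \<Delta>))"
    using Suc.prems by (simp add: add_ac)
  then have "derivable (\<Gamma> + replicate_mset k \<phi>) ({#Imp \<phi> \<psi>#} + (replicate_mset k \<psi> + \<Delta>))"
    by (rule derivable.imp_right)
  then have "derivable (\<Gamma> + replicate_mset k \<phi>) (replicate_mset k \<psi> + ({#Imp \<phi> \<psi>#} + \<Delta>))"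
    by (simp add: add_ac)
  then have "derivable \<Gamma> (replicate_mset k (Imp \<phi> \<psi>) + ({#Imp \<phi> \<psi>#} + \<Delta>))" by (rule Suc.IH)
  then show ?case by (simp add: add_ac)
qed

lemma der_impL:
  "derivable (\<Gamma> + replicate_mset k \<psi>) (replicate_mset k \<phi> + \<Delta>) \<Longrightarrow> derivable (\<Gamma> + replicate_mset k (Imp \<phi> \<psi>)) \<Delta>"
proof (induction k arbitrary: \<Gamma>)
  case 0 then show ?case by simp
next
  case (Suc k)
  have "derivable ((\<Gamma> + replicate_mset k \<psi>) + {#\<psi>#}) ({#\<phi>#} + (replicate_mset k \<phi> + \<Delta>))"
    using Suc.prems by (simp add: add_ac)
  then have "derivable ((\<Gamma> + replicate_mset k \<psi>) + {#Imp \<phi> \<psi>#}) (replicate_mset k \<phi> + \<Delta>)"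
    by (rule derivable.imp_left)
  then have "derivable ((\<Gamma> + {#Imp \<phi> \<psi>#}) + replicate_mset k \<psi>) (replicate_mset k \<phi> + \<Delta>)"
    by (simp add: add_ac)
  then have "derivable ((\<Gamma> + {#Imp \<phi> \<psi>#}) + replicate_mset k (Imp \<phi> \<psi>)) \<Delta>" by (rule Suc.IH)
  then show ?case by (simp add: add_ac)
qed

section \<open>Integer forms as sequents\<close>

definition posm :: "form \<Rightarrow> fm multiset" where
  "posm h = (\<Sum>\<theta>\<in>supp h. replicate_mset (nat \<lfloor>h \<theta>\<rfloor>) \<theta>)"
definition negm :: "form \<Rightarrow> fm multiset" where
  "negm h = (\<Sum>\<theta>\<in>supp h. replicate_mset (nat \<lfloor>- h \<theta>\<rfloor>) \<theta>)"

definition isint :: "form \<Rightarrow> bool" where "isint h \<longleftrightarrow> (\<forall>\<theta>. h \<theta> \<in> \<int>)"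

lemma count_sum_mset_fin: "finite S \<Longrightarrow> count (\<Sum>\<psi>\<in>S. M \<psi>) x = (\<Sum>\<psi>\<in>S. count (M \<psi>) x)"
  by (induction S rule: finite_induct) auto

lemma count_posm: "finite (supp h) \<Longrightarrow> count (posm h) \<theta> = nat \<lfloor>h \<theta>\<rfloor>"
  unfolding posm_def by (subst count_sum_mset_fin) (auto simp: sum.delta supp_def)

lemma count_negm: "finite (supp h) \<Longrightarrow> count (negm h) \<theta> = nat \<lfloor>- h \<theta>\<rfloor>"
  unfolding negm_def by (subst count_sum_mset_fin) (auto simp: sum.delta supp_def)

lemma int_nat_floor: "x \<in> \<int> \<Longrightarrow> real (nat \<lfloor>x\<rfloor>) - real (nat \<lfloor>- x\<rfloor>) = x"
  by (elim Ints_cases) auto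

lemma der_common:
  assumes fin: "finite (supp h)" and hi: "isint h" and d: "derivable (negm h) (posm h)"
    and c: "\<forall>\<theta>. real (count R \<theta>) - real (count L \<theta>) = h \<theta>"
  shows "derivable L R"
proof -
  define X where "X = L \<inter># R"
  have fl: "\<lfloor>real a - real b\<rfloor> = int a - int b" for a b :: nat
    by (metis floor_of_int of_int_diff of_int_of_nat_eq)
  have L: "L = negm h + X"
  proof (rule multiset_eqI)
    fix \<theta>
    have hh: "h \<theta> = real (count R \<theta>) - real (count L \<theta>)" using c by simp
    have "count (negm h) \<theta> = nat (int (count L \<theta>) - int (count R \<theta>))"
      unfolding count_negm[OF fin] hh by (simp add: fl[symmetric])
    then show "count L \<theta> = count (negm h + X) \<theta>"
      unfolding X_def count_union count_inter_mset by simp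
  qed
  have R: "R = posm h + X"
  proof (rule multiset_eqI)
    fix \<theta>
    have hh: "h \<theta> = real (count R \<theta>) - real (count L \<theta>)" using c by simp
    have "count (posm h) \<theta> = nat (int (count R \<theta>) - int (count L \<theta>))"
      unfolding count_posm[OF fin] hh by (simp add: fl)
    then show "count R \<theta> = count (posm h + X) \<theta>"
      unfolding X_def count_union count_inter_mset by simp
  qed
  show ?thesis using der_addid[OF d, of X] L R by simp
qed

definition scl :: "nat \<Rightarrow> form \<Rightarrow> form" where "scl N f = (\<lambda>\<theta>. real N * f \<theta>)"

lemma nat_floor_int: "x \<in> \<int> \<Longrightarrow> real (nat \<lfloor>x\<rfloor>) = max x 0"
  by (elim Ints_cases) auto

lemma rd_fin: "rd K f \<Longrightarrow> finite (supp f)"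
  by (induction rule: rd.induct) auto

lemma supp_scl: "supp (scl N f) \<subseteq> supp f" by (auto simp: supp_def scl_def)

lemma fin_scl: "finite (supp f) \<Longrightarrow> finite (supp (scl N f))"
  using supp_scl finite_subset by blast

lemma rat_clear:
  assumes "finite X" "\<forall>x\<in>X. x \<in> \<rat>"
  shows "\<exists>M::nat. M > 0 \<and> (\<forall>x\<in>X. real M * x \<in> \<int>)"
  using assms
proof (induction X rule: finite_induct)
  case empty then show ?case by (intro exI[of _ 1]) simp
next
  case (insert x F)
  then obtain M where M: "M > 0" "\<forall>y\<in>F. real M * y \<in> \<int>" by auto
  have "x \<in> \<rat>" using insert.prems by simp
  then obtain a b where ab: "b > 0" "x = of_int a / of_int b" by (elim Rats_cases') auto
  define M' where "M' = M * nat b"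
  have M'pos: "M' > 0" using M ab by (simp add: M'_def)
  have "real M' * x = of_int (int M * a)" using ab by (simp add: M'_def)
  then have x: "real M' * x \<in> \<int>" by simp
  have "real M' * y \<in> \<int>" if "y \<in> F" for y
  proof -
    have eq: "real M' * y = of_int b * (real M * y)" using ab by (simp add: M'_def)
    have "real M * y \<in> \<int>" using M(2) that by blast
    then have "of_int b * (real M * y) \<in> \<int>" by (rule Ints_mult[OF Ints_of_int])
    then show ?thesis by (simp only: eq)
  qed
  then show ?case using M'pos x by (intro exI[of _ M']) auto
qed

lemma posm_scale:
  assumes "finite (supp h)" "isint h"
  shows "posm (scl k h) = repeat_mset k (posm h)" "negm (scl k h) = repeat_mset k (negm h)"
proof -
  have fin': "finite (supp (scl k h))" using fin_scl[OF assms(1)] .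
  show "posm (scl k h) = repeat_mset k (posm h)"
  proof (rule multiset_eqI)
    fix \<theta>
    obtain z where z: "h \<theta> = of_int z" using assms(2) unfolding isint_def by (blast elim: Ints_cases)
    have e: "scl k h \<theta> = of_int (int k * z)" by (simp add: scl_def z)
    have "count (posm (scl k h)) \<theta> = nat \<lfloor>scl k h \<theta>\<rfloor>" by (rule count_posm[OF fin'])
    also have "\<dots> = k * nat z" unfolding e floor_of_int by (simp add: nat_mult_distrib)
    also have "\<dots> = count (repeat_mset k (posm h)) \<theta>"
      unfolding count_repeat_mset count_posm[OF assms(1)] z floor_of_int ..
    finally show "count (posm (scl k h)) \<theta> = count (repeat_mset k (posm h)) \<theta>" .
  qed
  show "negm (scl k h) = repeat_mset k (negm h)"
  proof (rule multiset_eqI)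
    fix \<theta>
    obtain z where z: "h \<theta> = of_int z" using assms(2) unfolding isint_def by (blast elim: Ints_cases)
    have e: "- scl k h \<theta> = of_int (int k * (- z))" by (simp add: scl_def z)
    have e2: "- h \<theta> = of_int (- z)" by (simp add: z)
    have "count (negm (scl k h)) \<theta> = nat \<lfloor>- scl k h \<theta>\<rfloor>" by (rule count_negm[OF fin'])
    also have "\<dots> = k * nat (- z)" unfolding e floor_of_int by (subst nat_mult_distrib) auto
    also have "\<dots> = count (repeat_mset k (negm h)) \<theta>"
      unfolding count_repeat_mset count_negm[OF assms(1)] e2 floor_of_int ..
    finally show "count (negm (scl k h)) \<theta> = count (repeat_mset k (negm h)) \<theta>" .
  qed
qed

definition goodN :: "form \<Rightarrow> nat \<Rightarrow> bool" where
  "goodN f N \<longleftrightarrow> N > 0 \<and> isint (scl N f) \<and> derivable (negm (scl N f)) (posm (scl N f))"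

lemma goodN_mult:
  assumes "finite (supp f)" "goodN f N" "k > 0"
  shows "goodN f (k * N)"
proof -
  have s: "scl (k * N) f = scl k (scl N f)" by (auto simp: scl_def)
  have fin: "finite (supp (scl N f))" by (rule fin_scl[OF assms(1)])
  have i: "isint (scl N f)" using assms(2) by (simp add: goodN_def)
  have "isint (scl (k * N) f)" using i unfolding isint_def s by (simp add: scl_def)
  moreover have "derivable (negm (scl (k * N) f)) (posm (scl (k * N) f))"
    unfolding s posm_scale[OF fin i] using assms(2) by (intro der_rep) (simp add: goodN_def)
  ultimately show ?thesis using assms by (simp add: goodN_def)
qed

lemma rc_pos: "finite (supp h) \<Longrightarrow> isint h \<Longrightarrow> real (count (posm h) \<theta>) = max (h \<theta>) 0"
  by (simp add: count_posm nat_floor_int isint_def)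
lemma rc_neg: "finite (supp h) \<Longrightarrow> isint h \<Longrightarrow> real (count (negm h) \<theta>) = max (- h \<theta>) 0"
  by (simp add: count_negm nat_floor_int isint_def)

lemma cnt_box: "count (image_mset Box M) \<theta> = (case \<theta> of Box \<chi> \<Rightarrow> count M \<chi> | _ \<Rightarrow> 0)"
  by (induction M) (auto split: fm.split)

lemma mset_eq_real: "(\<And>\<theta>. real (count A \<theta>) = real (count B \<theta>)) \<Longrightarrow> A = B"
  by (rule multiset_eqI) (simp add: of_nat_eq_iff)

lemma isint_upd: "isint h \<Longrightarrow> isint (h(x := 0))" by (simp add: isint_def)
lemma fin_upd: "finite (supp h) \<Longrightarrow> finite (supp (h(x := 0)))"
  by (rule finite_subset[of _ "supp h"]) (auto simp: supp_def)

lemma stepB_imp: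
  assumes fin: "finite (supp h)" and hi: "isint h"
    and d': "derivable (negm (impstep h \<phi> \<psi>)) (posm (impstep h \<phi> \<psi>))"
  shows "derivable (negm h) (posm h)"
proof -
  let ?I = "Imp \<phi> \<psi>"
  let ?h' = "impstep h \<phi> \<psi>"
  have ne: "?I \<noteq> \<phi>" "?I \<noteq> \<psi>" by (rule size_Imp_ne)+
  define a where "a = h ?I"
  have aI: "a \<in> \<int>" using hi by (simp add: isint_def a_def)
  have fin': "finite (supp ?h')"
    by (rule finite_subset[of _ "supp h \<union> {\<phi>, \<psi>}"]) (use fin in \<open>auto simp: supp_def impstep_def split: if_splits\<close>)
  have hi': "isint ?h'" using hi aI by (auto simp: isint_def impstep_def a_def)
  have h'v: "?h' \<theta> = h \<theta> - (if \<theta> = ?I then a else 0) + (if \<theta> = \<psi> then a else 0) - (if \<theta> = \<phi> then a else 0)" for \<theta>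
    by (simp add: impstep_def a_def)
  consider "a > 0" | "a < 0" | "a = 0" by linarith
  then show ?thesis
  proof cases
    case 1
    define k where "k = nat \<lfloor>a\<rfloor>"
    have ka: "real k = a" using 1 aI unfolding k_def by (simp add: nat_floor_int)
    define \<Delta>' where "\<Delta>' = posm (h(?I := 0))"
    have eqp: "posm h = replicate_mset k ?I + \<Delta>'"
    proof (rule mset_eq_real)
      fix \<theta> show "real (count (posm h) \<theta>) = real (count (replicate_mset k ?I + \<Delta>') \<theta>)"
        unfolding \<Delta>'_def using 1 ka
        by (auto simp: rc_pos[OF fin hi] rc_pos[OF fin_upd[OF fin] isint_upd[OF hi]] a_def)
    qed
    have "derivable (negm h + replicate_mset k \<phi>) (replicate_mset k \<psi> + \<Delta>')"
    proof (rule der_common[OF fin' hi' d'], rule allI)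
      fix \<theta>
      show "real (count (replicate_mset k \<psi> + \<Delta>') \<theta>) - real (count (negm h + replicate_mset k \<phi>) \<theta>) = ?h' \<theta>"
        unfolding \<Delta>'_def h'v using 1 ka ne
        by (auto simp: rc_pos[OF fin_upd[OF fin] isint_upd[OF hi]] rc_neg[OF fin hi] a_def max_def)
    qed
    then have "derivable (negm h) (replicate_mset k ?I + \<Delta>')" by (rule der_impR)
    then show ?thesis by (simp add: eqp)
  next
    case 2
    define k where "k = nat \<lfloor>- a\<rfloor>"
    have ka: "real k = - a" using 2 aI unfolding k_def by (simp add: nat_floor_int)
    define \<Gamma>' where "\<Gamma>' = negm (h(?I := 0))"
    have eqn: "negm h = \<Gamma>' + replicate_mset k ?I"
    proof (rule mset_eq_real)
      fix \<theta> show "real (count (negm h) \<theta>) = real (count (\<Gamma>' + replicate_mset k ?I) \<theta>)"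
        unfolding \<Gamma>'_def using 2 ka
        by (auto simp: rc_neg[OF fin hi] rc_neg[OF fin_upd[OF fin] isint_upd[OF hi]] a_def)
    qed
    have "derivable (\<Gamma>' + replicate_mset k \<psi>) (replicate_mset k \<phi> + posm h)"
    proof (rule der_common[OF fin' hi' d'], rule allI)
      fix \<theta>
      show "real (count (replicate_mset k \<phi> + posm h) \<theta>) - real (count (\<Gamma>' + replicate_mset k \<psi>) \<theta>) = ?h' \<theta>"
        unfolding \<Gamma>'_def h'v using 2 ka ne
        by (auto simp: rc_pos[OF fin hi] rc_neg[OF fin_upd[OF fin] isint_upd[OF hi]] a_def max_def)
    qed
    then have "derivable (\<Gamma>' + replicate_mset k ?I) (posm h)" by (rule der_impL)
    then show ?thesis by (simp add: eqn)
  next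
    case 3
    then have "?h' = h" by (auto simp: h'v)
    then show ?thesis using d' by simp
  qed
qed

lemma sum_Ints: "finite S \<Longrightarrow> (\<forall>x\<in>S. g x \<in> \<int>) \<Longrightarrow> (\<Sum>x\<in>S. g x) \<in> \<int>"
  by (induction S rule: finite_induct) auto

lemma stepB: "rd \<rat> f \<Longrightarrow> \<exists>N. goodN f N"
proof (induction rule: rd.induct)
  case (rimp f \<phi> \<psi>)
  obtain N' where N': "goodN (impstep f \<phi> \<psi>) N'" using rimp.IH by blast
  have fin': "finite (supp (impstep f \<phi> \<psi>))" by (rule rd_fin[OF rimp.hyps(1)])
  obtain M where M: "M > 0" "\<forall>x\<in>f ` supp f. real M * x \<in> \<int>"
    using rat_clear[of "f ` supp f"] rimp.hyps(2,3) by auto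
  define N where "N = M * N'"
  have gN: "goodN (impstep f \<phi> \<psi>) N" unfolding N_def by (rule goodN_mult[OF fin' N' M(1)])
  have Npos: "N > 0" using M(1) N' by (simp add: N_def goodN_def)
  have hi: "isint (scl N f)"
    unfolding isint_def
  proof
    fix \<theta> show "scl N f \<theta> \<in> \<int>"
    proof (cases "f \<theta> = 0")
      case True then show ?thesis by (simp add: scl_def)
    next
      case False
      then have "real M * f \<theta> \<in> \<int>" using M(2) by (auto simp: supp_def)
      then have "real N' * (real M * f \<theta>) \<in> \<int>" by (rule Ints_mult[OF Ints_of_nat])
      then show ?thesis by (simp add: scl_def N_def mult.assoc mult.left_commute)
    qed
  qed
  have eq: "scl N (impstep f \<phi> \<psi>) = impstep (scl N f) \<phi> \<psi>"
    by (auto simp: scl_def impstep_def algebra_simps)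
  have "derivable (negm (scl N f)) (posm (scl N f))"
    by (rule stepB_imp[OF fin_scl[OF rimp.hyps(2)] hi, where \<phi>=\<phi> and \<psi>=\<psi>]) (use gN in \<open>simp add: goodN_def eq\<close>)
  then show ?case using Npos hi by (auto simp: goodN_def)
next
  case (rbox S f c d \<mu>)
  note h = rbox.hyps
  have "\<forall>\<psi>\<in>S. \<exists>N. goodN (child c \<mu> \<psi>) N" using rbox.IH by blast
  from bchoice[OF this] obtain Nf where Nf: "\<forall>\<psi>\<in>S. goodN (child c \<mu> \<psi>) (Nf \<psi>)" by (elim exE)
  have rdc: "\<forall>\<psi>\<in>S. rd \<rat> (child c \<mu> \<psi>)" using rbox.IH by blast
  define Dset where "Dset = {\<theta>. d \<theta> \<noteq> 0}"
  have Dsub: "Dset \<subseteq> Box -` supp f"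
  proof
    fix \<theta> assume "\<theta> \<in> Dset"
    then have "d \<theta> \<noteq> 0" by (simp add: Dset_def)
    then have "c \<theta> = 0" using h(7) by blast
    then have "f (Box \<theta>) \<noteq> 0" using h(6) \<open>d \<theta> \<noteq> 0\<close> by simp
    then show "\<theta> \<in> Box -` supp f" by (simp add: supp_def)
  qed
  have finD: "finite Dset"
    by (rule finite_subset[OF Dsub finite_vimageI[OF h(2)]]) (simp add: inj_on_def)
  have \<mu>D: "\<mu> \<theta> \<psi> = 0" if "\<theta> \<notin> Dset" for \<theta> \<psi>
  proof (cases "\<psi> \<in> S")
    case True
    have "d \<theta> = 0" using that by (simp add: Dset_def)
    then have "(\<Sum>\<psi>\<in>S. \<mu> \<theta> \<psi>) = 0" using h(11) by simp
    then have "\<forall>\<psi>\<in>S. \<mu> \<theta> \<psi> = 0" using h(1) h(9) by (simp add: sum_nonneg_eq_0_iff)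
    then show ?thesis using True by blast
  next
    case False then show ?thesis using h(10) by blast
  qed
  define X where "X = c ` S \<union> d ` Dset \<union> (\<lambda>p. \<mu> (fst p) (snd p)) ` (Dset \<times> S)"
  have finX: "finite X" unfolding X_def using h(1) finD by auto
  have XQ: "\<forall>x\<in>X. x \<in> \<rat>" unfolding X_def using h(12,13) by auto
  obtain M where M: "M > 0" "\<forall>x\<in>X. real M * x \<in> \<int>" using rat_clear[OF finX XQ] by blast
  define P where "P = (\<Prod>\<psi>\<in>S. Nf \<psi>)"
  have Ppos: "P > 0" unfolding P_def using Nf h(1) by (auto simp: goodN_def)
  define N where "N = M * P"
  have Npos: "N > 0" using M(1) Ppos by (simp add: N_def)
  have NI: "real N * x \<in> \<int>" if "x \<in> X" for x
  proof -
    have "real M * x \<in> \<int>" using M(2) that by blast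
    then have "real P * (real M * x) \<in> \<int>" by (rule Ints_mult[OF Ints_of_nat])
    then show ?thesis by (simp add: N_def mult.assoc mult.left_commute)
  qed
  define Cn where "Cn \<psi> = real N * c \<psi>" for \<psi>
  define Dn where "Dn \<theta> = real N * d \<theta>" for \<theta>
  define Mu where "Mu \<theta> \<psi> = real N * \<mu> \<theta> \<psi>" for \<theta> \<psi>
  have CnI: "Cn \<psi> \<in> \<int>" for \<psi>
    using NI[of "c \<psi>"] h(8) by (cases "\<psi> \<in> S") (auto simp: Cn_def X_def)
  have MuI: "Mu \<theta> \<psi> \<in> \<int>" for \<theta> \<psi>
  proof (cases "\<theta> \<in> Dset \<and> \<psi> \<in> S")
    case True
    have "\<mu> \<theta> \<psi> \<in> X" unfolding X_def using True by (intro UnI2 image_eqI[of _ _ "(\<theta>,\<psi>)"]) auto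
    then show ?thesis using NI by (simp add: Mu_def)
  next
    case False then show ?thesis using \<mu>D h(10) by (auto simp: Mu_def)
  qed
  have Cn0: "Cn \<psi> \<ge> 0" for \<psi> using h(7) by (simp add: Cn_def)
  have Mu0: "Mu \<theta> \<psi> \<ge> 0" for \<theta> \<psi> using h(9) by (simp add: Mu_def)
  have DnMu: "Dn \<theta> = (\<Sum>\<psi>\<in>S. Mu \<theta> \<psi>)" for \<theta>
    unfolding Dn_def Mu_def sum_distrib_left[symmetric] using h(11) by simp
  define L where "L \<psi> = (\<Sum>\<theta>\<in>Dset. replicate_mset (nat \<lfloor>Mu \<theta> \<psi>\<rfloor>) \<theta>)" for \<psi>
  define R where "R \<psi> = replicate_mset (nat \<lfloor>Cn \<psi>\<rfloor>) \<psi>" for \<psi>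
  have cL: "real (count (L \<psi>) \<theta>) = Mu \<theta> \<psi>" for \<psi> \<theta>
  proof -
    have "count (L \<psi>) \<theta> = (\<Sum>\<theta>'\<in>Dset. count (replicate_mset (nat \<lfloor>Mu \<theta>' \<psi>\<rfloor>) \<theta>') \<theta>)"
      unfolding L_def by (rule count_sum_mset_fin[OF finD])
    also have "\<dots> = (if \<theta> \<in> Dset then nat \<lfloor>Mu \<theta> \<psi>\<rfloor> else 0)"
      using finD by (simp add: sum.delta' count_replicate_mset eq_commute[of \<theta>] cong: if_cong)
    finally show ?thesis using \<mu>D[of \<theta> \<psi>] MuI[of \<theta> \<psi>] Mu0[of \<theta> \<psi>]
      by (auto simp: nat_floor_int Mu_def)
  qed
  have cR: "real (count (R \<psi>) \<theta>) = (if \<theta> = \<psi> then Cn \<psi> else 0)" for \<psi> \<theta>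
    unfolding R_def using CnI[of \<psi>] Cn0[of \<psi>] by (auto simp: nat_floor_int)
  have dch: "derivable (image_mset Box (L \<psi>)) (replicate_mset (nat \<lfloor>Cn \<psi>\<rfloor>) (Box \<psi>))" if \<psi>S: "\<psi> \<in> S" for \<psi>
  proof -
    have fc: "finite (supp (child c \<mu> \<psi>))" using rd_fin rdc \<psi>S by blast
    have g: "goodN (child c \<mu> \<psi>) N"
    proof -
      have "N = (M * (\<Prod>\<psi>'\<in>S - {\<psi>}. Nf \<psi>')) * Nf \<psi>"
        unfolding N_def P_def using h(1) \<psi>S by (simp add: prod.remove mult_ac)
      moreover have "M * (\<Prod>\<psi>'\<in>S - {\<psi>}. Nf \<psi>') > 0" using Nf by (intro mult_pos_pos M(1) prod_pos) (auto simp: goodN_def)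
      ultimately show ?thesis using goodN_mult[OF fc bspec[OF Nf \<psi>S]] by metis
    qed
    have "derivable (L \<psi>) (R \<psi>)"
    proof (rule der_common[OF fin_scl[OF fc]])
      show "isint (scl N (child c \<mu> \<psi>))" using g by (simp add: goodN_def)
      show "derivable (negm (scl N (child c \<mu> \<psi>))) (posm (scl N (child c \<mu> \<psi>)))" using g by (simp add: goodN_def)
      show "\<forall>\<theta>. real (count (R \<psi>) \<theta>) - real (count (L \<psi>) \<theta>) = scl N (child c \<mu> \<psi>) \<theta>"
        by (auto simp: cR cL scl_def child_def Cn_def Mu_def algebra_simps)
    qed
    then show ?thesis unfolding R_def by (rule derivable.box)
  qed
  have dall: "derivable (\<Sum>\<psi>\<in>S. image_mset Box (L \<psi>)) (\<Sum>\<psi>\<in>S. replicate_mset (nat \<lfloor>Cn \<psi>\<rfloor>) (Box \<psi>))"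
    by (rule der_sum[OF h(1)]) (use dch in blast)
  define H where "H = scl N f"
  have finH: "finite (supp H)" unfolding H_def by (rule fin_scl[OF h(2)])
  have Hv: "H (Box \<chi>) = Cn \<chi> - Dn \<chi>" "H (Var p) = 0" "H (Imp a b) = 0" for \<chi> p a b
  proof -
    have "f (Box \<chi>) = c \<chi> - d \<chi>" using h(6) by blast
    then show "H (Box \<chi>) = Cn \<chi> - Dn \<chi>" unfolding H_def scl_def Cn_def Dn_def by (simp add: right_diff_distrib)
    show "H (Var p) = 0" "H (Imp a b) = 0" using h(4,5) by (auto simp: H_def scl_def)
  qed
  have DnI: "Dn \<chi> \<in> \<int>" for \<chi> using DnMu[of \<chi>] MuI h(1) by (simp add: sum_Ints)
  have HI: "isint H" unfolding isint_def
  proof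
    fix \<theta> show "H \<theta> \<in> \<int>" by (cases \<theta>) (auto simp: Hv CnI DnI)
  qed
  have compl: "Cn \<chi> = 0 \<or> Dn \<chi> = 0" for \<chi> using h(7) by (auto simp: Cn_def Dn_def)
  have Dn0: "Dn \<chi> \<ge> 0" for \<chi> using h(7) by (simp add: Dn_def)
  have eqL: "(\<Sum>\<psi>\<in>S. image_mset Box (L \<psi>)) = negm H"
  proof (rule mset_eq_real)
    fix \<theta>
    have "real (count (\<Sum>\<psi>\<in>S. image_mset Box (L \<psi>)) \<theta>) = (\<Sum>\<psi>\<in>S. real (count (image_mset Box (L \<psi>)) \<theta>))"
      by (simp add: count_sum_mset_fin[OF h(1)])
    also have "\<dots> = max (- H \<theta>) 0"
    proof (cases \<theta>)
      case (Box \<chi>)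
      have "(\<Sum>\<psi>\<in>S. real (count (image_mset Box (L \<psi>)) \<theta>)) = (\<Sum>\<psi>\<in>S. Mu \<chi> \<psi>)"
        by (simp add: Box cnt_box cL)
      also have "\<dots> = Dn \<chi>" by (simp add: DnMu)
      also have "\<dots> = max (- H \<theta>) 0" using compl[of \<chi>] Dn0[of \<chi>] Cn0[of \<chi>] by (auto simp: Box Hv max_def)
      finally show ?thesis .
    qed (auto simp: cnt_box Hv)
    also have "\<dots> = real (count (negm H) \<theta>)" by (simp add: rc_neg[OF finH HI])
    finally show "real (count (\<Sum>\<psi>\<in>S. image_mset Box (L \<psi>)) \<theta>) = real (count (negm H) \<theta>)" .
  qed
  have eqR: "(\<Sum>\<psi>\<in>S. replicate_mset (nat \<lfloor>Cn \<psi>\<rfloor>) (Box \<psi>)) = posm H"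
  proof (rule mset_eq_real)
    fix \<theta>
    have "real (count (\<Sum>\<psi>\<in>S. replicate_mset (nat \<lfloor>Cn \<psi>\<rfloor>) (Box \<psi>)) \<theta>)
        = (\<Sum>\<psi>\<in>S. real (count (replicate_mset (nat \<lfloor>Cn \<psi>\<rfloor>) (Box \<psi>)) \<theta>))"
      by (simp add: count_sum_mset_fin[OF h(1)])
    also have "\<dots> = max (H \<theta>) 0"
    proof (cases \<theta>)
      case (Box \<chi>)
      have "(\<Sum>\<psi>\<in>S. real (count (replicate_mset (nat \<lfloor>Cn \<psi>\<rfloor>) (Box \<psi>)) \<theta>))
          = (\<Sum>\<psi>\<in>S. if \<psi> = \<chi> then Cn \<chi> else 0)"
        by (intro sum.cong refl) (use CnI Cn0 in \<open>auto simp: Box nat_floor_int\<close>)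
      also have "\<dots> = (if \<chi> \<in> S then Cn \<chi> else 0)" using h(1) by (simp add: sum.delta')
      also have "\<dots> = Cn \<chi>" using h(8) by (auto simp: Cn_def)
      also have "\<dots> = max (H \<theta>) 0" using compl[of \<chi>] Dn0[of \<chi>] Cn0[of \<chi>] by (auto simp: Box Hv max_def)
      finally show ?thesis .
    qed (auto simp: Hv)
    also have "\<dots> = real (count (posm H) \<theta>)" by (simp add: rc_pos[OF finH HI])
    finally show "real (count (\<Sum>\<psi>\<in>S. replicate_mset (nat \<lfloor>Cn \<psi>\<rfloor>) (Box \<psi>)) \<theta>) = real (count (posm H) \<theta>)" .
  qed
  have "goodN f N" unfolding goodN_def using Npos HI dall eqL eqR by (simp add: H_def)
  then show ?case by blast
qed

theorem proposition4p11:
  fixes \<Gamma> \<Delta> :: "fm multiset"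
  assumes "seq_valid \<Gamma> \<Delta>"
  shows "derivable \<Gamma> \<Delta>"
proof -
  define f where "f = mform \<Gamma> \<Delta>"
  have fin: "finite (supp f)" unfolding f_def
    by (rule finite_subset[OF supp_mform]) simp
  have val: "fvalid f" unfolding f_def by (rule seq_valid_fvalid[OF assms])
  have r: "rd UNIV f" by (rule valid_rd[OF fin val])
  obtain A where A: "finite A"
    "\<forall>g. qlin g \<longrightarrow> (\<forall>x\<in>A. 0 < x \<longrightarrow> 0 < g x) \<longrightarrow> (\<forall>x\<in>A. g x \<in> \<rat>) \<longrightarrow> rd \<rat> (\<lambda>\<theta>. g (f \<theta>))"
    using rd_qmap[OF r] by blast
  obtain g where g: "qlin g" "g 1 = 1" "\<forall>x\<in>A. 0 < x \<longrightarrow> 0 < g x" "\<forall>x\<in>A. g x \<in> \<rat>"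
    using exists_qmap[OF A(1)] by blast
  have rq: "rd \<rat> (\<lambda>\<theta>. g (f \<theta>))" using A(2) g by blast
  have gf: "(\<lambda>\<theta>. g (f \<theta>)) = f"
  proof
    fix \<theta>
    have fi: "f \<theta> \<in> \<rat>" by (simp add: f_def mform_def)
    have "g (f \<theta> * 1) = f \<theta> * g 1" using g(1) fi unfolding qlin_def by blast
    then show "g (f \<theta>) = f \<theta>" using g(2) by simp
  qed
  obtain N where N: "goodN f N" using stepB[OF rq] gf by auto
  have Npos: "N > 0" and hi: "isint (scl N f)" and d: "derivable (negm (scl N f)) (posm (scl N f))"
    using N by (auto simp: goodN_def)
  have "derivable (repeat_mset N \<Gamma>) (repeat_mset N \<Delta>)"
  proof (rule der_common[OF fin_scl[OF fin] hi d], rule allI)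
    fix \<theta>
    show "real (count (repeat_mset N \<Delta>) \<theta>) - real (count (repeat_mset N \<Gamma>) \<theta>) = scl N f \<theta>"
      by (simp add: scl_def f_def mform_def algebra_simps)
  qed
  then have "derivable (repeat_mset 2 (repeat_mset N \<Gamma>)) (repeat_mset 2 (repeat_mset N \<Delta>))"
    by (rule der_rep)
  then have "derivable (repeat_mset (2 * N) \<Gamma>) (repeat_mset (2 * N) \<Delta>)"
    by (simp add: repeat_mset_distrib2 mult.commute)
  moreover have "2 * N \<ge> 2" using Npos by simp
  ultimately show ?thesis using derivable.sc by blast
qed

end
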